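(* In the setting described in the context, for real constants $c_0,c_1,c_2$ consider the covariant derivative $D$ determined by $$D\Xi^a=c_0X^a\varrho\otimes\varrho+c_1(-1)^{\hat a}\,\Xi^a\otimes\varrho+c_2\,\varrho\otimes\Xi^a,\qquad a=1,2,3.$$ Its torsion $\Theta=d-\pi\circ D$ satisfies $\Theta(\Xi^a)=-(c_1+c_2)\,\varrho\wedge\Xi^a$; hence $D$ is torsionless if and only if $c_2=-c_1$, so the torsionless connections of this form are exactly the two-parameter family $$D\Xi^a=c_0X^a\varrho\otimes\varrho+c_1\big((-1)^{\hat a}\Xi^a\otimes\varrho-\varrho\otimes\Xi^a\big),$$ i.e. $D\xi_1=c_0\theta_1\varrho\otimes\varrho+c_1(\xi_1\otimes\varrho-\varrho\otimes\xi_1)$, $D\eta=c_0x\varrho\otimes\varrho-c_1(\eta\otimes\varrho+\varrho\otimes\eta)$, $D\xi_2=c_0\theta_2\varrho\otimes\varrho+c_1(\xi_2\otimes\varrho-\varrho\otimes\xi_2)$.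
   Context: Fix a real (commuting) parameter $h$. $\mathcal A$ is the $\mathbb Z_2$-graded algebra (quantum superspace covariant under the super-Jordanian quantum supergroup $OSp_h(2/1)$) generated by odd $\theta_1,\theta_2$ and even $x$ with relations $[\theta_1,x]=-hx\theta_2$, $\{\theta_1,\theta_2\}=0$, $[\theta_2,x]=0$, $\theta_1^2=-\frac h2(x^2-2\theta_1\theta_2)$, $\theta_2^2=0$. Write $(X^1,X^2,X^3)=(\theta_1,x,\theta_2)$, index parities $\hat1=\hat3=0$, $\hat2=1$, and $\Xi^a=dX^a$, i.e. $\xi_1=d\theta_1$, $\eta=dx$, $\xi_2=d\theta_2$; $\xi_1,\xi_2$ are even and $\eta$ odd (the parity of $\Xi^a$ is $\hat a$). The exterior derivative $d$ is nilpotent and satisfies $d(f\wedge g)=df\wedge g+(-1)^{\hat f}f\wedge dg$. The differential calculus has the relations: $\xi_1\wedge\eta-\eta\wedge\xi_1=h\eta\wedge\xi_2$, $\xi_1\wedge\xi_2-\xi_2\wedge\xi_1=h\xi_2\wedge\xi_2$, $\eta\wedge\xi_2=\xi_2\wedge\eta$, $\eta\wedge\eta=-\frac h2\xi_2\wedge\xi_2$; and $[\theta_1,\xi_1]=h(\theta_1\xi_2+x\eta-\theta_2\xi_1-\frac h2\theta_2\xi_2)$, $\{\theta_1,\eta\}=hx\xi_2$, $[\theta_1,\xi_2]=h\theta_2\xi_2$, $[x,\xi_1]=-h\theta_2\eta$, $[x,\eta]=-h\theta_2\xi_2$, $[x,\xi_2]=0$, $[\theta_2,\xi_1]=-h\theta_2\xi_2$,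 $\{\theta_2,\eta\}=0$, $[\theta_2,\xi_2]=0$. The invariant one-form is $\varrho=\theta_1\xi_2+x\eta-\theta_2\xi_1-\frac h2\theta_2\xi_2$. The map $\pi:\Omega^1\otimes_{\mathcal A}\Omega^1\to\Omega^2$ is $\pi(\alpha\otimes\beta)=\alpha\wedge\beta$. The map $\sigma$ on $\Omega^1\otimes_{\mathcal A}\Omega^1$ is the $\mathcal A$-bilinear map given by $\sigma(\xi_1\otimes\xi_1)=\xi_1\otimes\xi_1-h(\xi_1\otimes\xi_2+\eta\otimes\eta-\xi_2\otimes\xi_1-\frac h2\xi_2\otimes\xi_2)$, $\sigma(\xi_1\otimes\eta)=\eta\otimes\xi_1+h\xi_2\otimes\eta$, $\sigma(\xi_1\otimes\xi_2)=\xi_2\otimes\xi_1+h\xi_2\otimes\xi_2$, $\sigma(\eta\otimes\xi_1)=\xi_1\otimes\eta-h\eta\otimes\xi_2$, $\sigma(\eta\otimes\eta)=-\eta\otimes\eta-h\xi_2\otimes\xi_2$, $\sigma(\eta\otimes\xi_2)=\xi_2\otimes\eta$, $\sigma(\xi_2\otimes\xi_1)=\xi_1\otimes\xi_2-h\xi_2\otimes\xi_2$, $\sigma(\xi_2\otimes\eta)=\eta\otimes\xi_2$, $\sigma(\xi_2\otimes\xi_2)=\xi_2\otimes\xi_2$. A covariant derivative (linear connection) is a linear map $D:\Omega^1\to\Omega^1\otimes_{\mathcal A}\Omega^1$ with $D(f\xi)=df\otimes\xi+(-1)^{\hat f}fD\xi$ and $D(\xi f)=(-1)^{\hat\xi}\sigma(\xi\otimes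 df)+(D\xi)f$ for homogeneous $f\in\mathcal A$, $\xi\in\Omega^1$; it is determined by its values on $\Xi^a$. Its torsion is $\Theta=d-\pi\circ D$. *)

theory Defs
  imports Complex_Main
begin

datatype gen = Th1 | Xx | Th2 | Xi1 | Eta | Xi2

fun gpar :: "gen \<Rightarrow> bool" where
  "gpar Th1 = True" | "gpar Xx = False" | "gpar Th2 = True"
| "gpar Xi1 = False" | "gpar Eta = True" | "gpar Xi2 = False"

fun gdeg :: "gen \<Rightarrow> nat" where
  "gdeg Th1 = 0" | "gdeg Xx = 0" | "gdeg Th2 = 0"
| "gdeg Xi1 = 1" | "gdeg Eta = 1" | "gdeg Xi2 = 1"

text \<open>Terms of the free unital associative real algebra on the generators:
  C r is r times the unit, Pl is sum, Tm is (wedge / tensor) product.\<close>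
datatype fexp = G gen | C real | Pl fexp fexp | Tm fexp fexp

definition mn :: "fexp \<Rightarrow> fexp \<Rightarrow> fexp" where "mn a b = Pl a (Tm (C (-1)) b)"
definition sm :: "real \<Rightarrow> fexp \<Rightarrow> fexp" where "sm r a = Tm (C r) a"

inductive cong :: "(fexp \<times> fexp) set \<Rightarrow> fexp \<Rightarrow> fexp \<Rightarrow> bool" for R where
  rel: "(a, b) \<in> R \<Longrightarrow> cong R a b"
| refl: "cong R a a"
| sym: "cong R a b \<Longrightarrow> cong R b a"
| trans: "cong R a b \<Longrightarrow> cong R b c \<Longrightarrow> cong R a c"
| pl_cong: "cong R a a' \<Longrightarrow> cong R b b' \<Longrightarrow> cong R (Pl a b) (Pl a' b')"
| tm_cong: "cong R a a' \<Longrightarrow> cong R b b' \<Longrightarrow> cong R (Tm a b) (Tm a' b')"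
| pl_assoc: "cong R (Pl (Pl a b) c) (Pl a (Pl b c))"
| pl_comm: "cong R (Pl a b) (Pl b a)"
| pl_zero: "cong R (Pl (C 0) a) a"
| pl_neg: "cong R (Pl a (Tm (C (-1)) a)) (C 0)"
| tm_assoc: "cong R (Tm (Tm a b) c) (Tm a (Tm b c))"
| tm_one_l: "cong R (Tm (C 1) a) a"
| tm_one_r: "cong R (Tm a (C 1)) a"
| distl: "cong R (Tm a (Pl b c)) (Pl (Tm a b) (Tm a c))"
| distr: "cong R (Tm (Pl a b) c) (Pl (Tm a c) (Tm b c))"
| c_add: "cong R (Pl (C r) (C s)) (C (r + s))"
| c_mul: "cong R (Tm (C r) (C s)) (C (r * s))"
| c_central: "cong R (Tm (C r) a) (Tm a (C r))"

abbreviation "t1 \<equiv> G Th1"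
abbreviation "xx \<equiv> G Xx"
abbreviation "t2 \<equiv> G Th2"
abbreviation "e1 \<equiv> G Xi1"
abbreviation "et \<equiv> G Eta"
abbreviation "e2 \<equiv> G Xi2"

definition rho :: "real \<Rightarrow> fexp" where
  "rho h = mn (Pl (Tm t1 e2) (Tm xx et)) (Pl (Tm t2 e1) (sm (h/2) (Tm t2 e2)))"

definition relA :: "real \<Rightarrow> (fexp \<times> fexp) set" where
  "relA h = {
    (mn (Tm t1 xx) (Tm xx t1), sm (-h) (Tm xx t2)),
    (Pl (Tm t1 t2) (Tm t2 t1), C 0),
    (mn (Tm t2 xx) (Tm xx t2), C 0),
    (Tm t1 t1, sm (-h/2) (mn (Tm xx xx) (sm 2 (Tm t1 t2)))),
    (Tm t2 t2, C 0) }"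

definition relB :: "real \<Rightarrow> (fexp \<times> fexp) set" where
  "relB h = {
    (mn (Tm t1 e1) (Tm e1 t1), sm h (rho h)),
    (Pl (Tm t1 et) (Tm et t1), sm h (Tm xx e2)),
    (mn (Tm t1 e2) (Tm e2 t1), sm h (Tm t2 e2)),
    (mn (Tm xx e1) (Tm e1 xx), sm (-h) (Tm t2 et)),
    (mn (Tm xx et) (Tm et xx), sm (-h) (Tm t2 e2)),
    (mn (Tm xx e2) (Tm e2 xx), C 0),
    (mn (Tm t2 e1) (Tm e1 t2), sm (-h) (Tm t2 e2)),
    (Pl (Tm t2 et) (Tm et t2), C 0),
    (mn (Tm t2 e2) (Tm e2 t2), C 0) }"

definition relW :: "real \<Rightarrow> (fexp \<times> fexp) set" where
  "relW h = {
    (mn (Tm e1 et) (Tm et e1), sm h (Tm et e2)),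
    (mn (Tm e1 e2) (Tm e2 e1), sm h (Tm e2 e2)),
    (Tm et e2, Tm e2 et),
    (Tm et et, sm (-h/2) (Tm e2 e2)) }"

text \<open>Equality in Omega1 (x)_A Omega1 (tensor product = concatenation without
  the wedge relations; also equality in A and in Omega1) ...\<close>
definition eqT :: "real \<Rightarrow> fexp \<Rightarrow> fexp \<Rightarrow> bool" where
  "eqT h = cong (relA h \<union> relB h)"

text \<open>... and equality in the exterior algebra Omega (in particular Omega2).
  The map pi (alpha (x) beta \<mapsto> alpha \<and> beta) is the identity on representatives.\<close>
definition eqO :: "real \<Rightarrow> fexp \<Rightarrow> fexp \<Rightarrow> bool" where
  "eqO h = cong (relA h \<union> relB h \<union> relW h)"

inductive fdeg :: "fexp \<Rightarrow> nat \<Rightarrow> bool" where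
  "fdeg (G g) (gdeg g)"
| "fdeg (C r) 0"
| "fdeg (C 0) k"
| "fdeg a k \<Longrightarrow> fdeg b k \<Longrightarrow> fdeg (Pl a b) k"
| "fdeg a i \<Longrightarrow> fdeg b j \<Longrightarrow> fdeg (Tm a b) (i + j)"

inductive ispar :: "fexp \<Rightarrow> bool \<Rightarrow> bool" where
  "ispar (G g) (gpar g)"
| "ispar (C r) False"
| "ispar (C 0) p"
| "ispar a p \<Longrightarrow> ispar b p \<Longrightarrow> ispar (Pl a b) p"
| "ispar a p \<Longrightarrow> ispar b q \<Longrightarrow> ispar (Tm a b) (p \<noteq> q)"

definition sgn :: "bool \<Rightarrow> real" where "sgn p = (if p then -1 else 1)"

fun evod :: "fexp \<Rightarrow> fexp \<times> fexp" where
  "evod (G g) = (if gpar g then (C 0, G g) else (G g, C 0))"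
| "evod (C r) = (C r, C 0)"
| "evod (Pl a b) = (let (ea, oa) = evod a; (eb, ob) = evod b in (Pl ea eb, Pl oa ob))"
| "evod (Tm a b) = (let (ea, oa) = evod a; (eb, ob) = evod b in
     (Pl (Tm ea eb) (Tm oa ob), Pl (Tm ea ob) (Tm oa eb)))"

fun dgen :: "gen \<Rightarrow> fexp" where
  "dgen Th1 = G Xi1" | "dgen Xx = G Eta" | "dgen Th2 = G Xi2"
| "dgen Xi1 = C 0" | "dgen Eta = C 0" | "dgen Xi2 = C 0"

fun dd :: "fexp \<Rightarrow> fexp" where
  "dd (G g) = dgen g"
| "dd (C r) = C 0"
| "dd (Pl a b) = Pl (dd a) (dd b)"
| "dd (Tm a b) = Pl (Tm (dd a) b)
      (Pl (Tm (fst (evod a)) (dd b)) (Tm (C (-1)) (Tm (snd (evod a)) (dd b))))"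

fun sigtab :: "real \<Rightarrow> gen \<Rightarrow> gen \<Rightarrow> fexp" where
  "sigtab h Xi1 Xi1 = mn (Tm e1 e1)
      (sm h (mn (Pl (Tm e1 e2) (Tm et et)) (Pl (Tm e2 e1) (sm (h/2) (Tm e2 e2)))))"
| "sigtab h Xi1 Eta = Pl (Tm et e1) (sm h (Tm e2 et))"
| "sigtab h Xi1 Xi2 = Pl (Tm e2 e1) (sm h (Tm e2 e2))"
| "sigtab h Eta Xi1 = mn (Tm e1 et) (sm h (Tm et e2))"
| "sigtab h Eta Eta = mn (sm (-1) (Tm et et)) (sm h (Tm e2 e2))"
| "sigtab h Eta Xi2 = Tm e2 et"
| "sigtab h Xi2 Xi1 = mn (Tm e1 e2) (sm h (Tm e2 e2))"
| "sigtab h Xi2 Eta = Tm et e2"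
| "sigtab h Xi2 Xi2 = Tm e2 e2"
| "sigtab h a b = C 0"

definition isXi :: "gen \<Rightarrow> bool" where "isXi g \<longleftrightarrow> g \<in> {Xi1, Eta, Xi2}"

definition is_sigma :: "real \<Rightarrow> (fexp \<Rightarrow> fexp) \<Rightarrow> bool" where
  "is_sigma h sig \<longleftrightarrow>
    (\<forall>a b. fdeg a 2 \<longrightarrow> fdeg b 2 \<longrightarrow> eqT h a b \<longrightarrow> eqT h (sig a) (sig b)) \<and>
    (\<forall>a b. fdeg a 2 \<longrightarrow> fdeg b 2 \<longrightarrow> eqT h (sig (Pl a b)) (Pl (sig a) (sig b))) \<and>
    (\<forall>f a. fdeg f 0 \<longrightarrow> fdeg a 2 \<longrightarrow> eqT h (sig (Tm f a)) (Tm f (sig a))) \<and>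
    (\<forall>f a. fdeg f 0 \<longrightarrow> fdeg a 2 \<longrightarrow> eqT h (sig (Tm a f)) (Tm (sig a) f)) \<and>
    (\<forall>a b. isXi a \<longrightarrow> isXi b \<longrightarrow> eqT h (sig (Tm (G a) (G b))) (sigtab h a b))"

definition is_connection :: "real \<Rightarrow> (fexp \<Rightarrow> fexp) \<Rightarrow> (fexp \<Rightarrow> fexp) \<Rightarrow> bool" where
  "is_connection h sig D \<longleftrightarrow>
    (\<forall>a b. fdeg a 1 \<longrightarrow> fdeg b 1 \<longrightarrow> eqT h a b \<longrightarrow> eqT h (D a) (D b)) \<and>
    (\<forall>a b. fdeg a 1 \<longrightarrow> fdeg b 1 \<longrightarrow> eqT h (D (Pl a b)) (Pl (D a) (D b))) \<and>
    (\<forall>r a. fdeg a 1 \<longrightarrow> eqT h (D (sm r a)) (sm r (D a))) \<and>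
    (\<forall>f p xi. fdeg f 0 \<longrightarrow> ispar f p \<longrightarrow> fdeg xi 1 \<longrightarrow>
       eqT h (D (Tm f xi)) (Pl (Tm (dd f) xi) (Tm (C (sgn p)) (Tm f (D xi))))) \<and>
    (\<forall>f xi q. fdeg f 0 \<longrightarrow> fdeg xi 1 \<longrightarrow> ispar xi q \<longrightarrow>
       eqT h (D (Tm xi f)) (Pl (Tm (C (sgn q)) (sig (Tm xi (dd f)))) (Tm (D xi) f)))"

definition torsion :: "(fexp \<Rightarrow> fexp) \<Rightarrow> fexp \<Rightarrow> fexp" where
  "torsion D w = mn (dd w) (D w)"

definition torsionless :: "real \<Rightarrow> (fexp \<Rightarrow> fexp) \<Rightarrow> bool" where
  "torsionless h D \<longleftrightarrow> (\<forall>w. fdeg w 1 \<longrightarrow> eqO h (torsion D w) (C 0))"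

fun Xa :: "nat \<Rightarrow> fexp" where
  "Xa (Suc 0) = G Th1" | "Xa (Suc (Suc 0)) = G Xx" | "Xa _ = G Th2"
fun Xia :: "nat \<Rightarrow> fexp" where
  "Xia (Suc 0) = G Xi1" | "Xia (Suc (Suc 0)) = G Eta" | "Xia _ = G Xi2"
definition hat :: "nat \<Rightarrow> nat" where "hat a = (if a = 2 then 1 else 0)"

end

theory Submission
  imports Defs
begin


declare cong.trans[trans]

lemma cong_mono: "cong R a b \<Longrightarrow> R \<subseteq> S \<Longrightarrow> cong S a b"
  by (induction rule: cong.induct) (auto intro: cong.intros)

lemma eqT_eqO: "eqT h a b \<Longrightarrow> eqO h a b"
  unfolding eqT_def eqO_def by (erule cong_mono) auto

lemma cg_minus_def: "cong R (mn a b) (Pl a (Tm (C (-1)) b))" by (simp add: mn_def cong.refl)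

lemma cg_zero_l: "cong R (Tm (C 0) a) (C 0)"
proof -
  have "cong R (C 0) (Pl (C 1) (Tm (C (-1)) (C 1)))" by (rule cong.sym, rule cong.pl_neg)
  hence "cong R (Tm (C 0) a) (Tm (Pl (C 1) (Tm (C (-1)) (C 1))) a)" by (rule cong.tm_cong) (rule cong.refl)
  also have "cong R \<dots> (Pl (Tm (C 1) a) (Tm (Tm (C (-1)) (C 1)) a))" by (rule cong.distr)
  also have "cong R \<dots> (Pl a (Tm (C (-1)) a))"
    by (intro cong.pl_cong cong.tm_one_l) (meson cong.tm_assoc cong.tm_cong cong.refl cong.tm_one_l cong.trans)
  also have "cong R \<dots> (C 0)" by (rule cong.pl_neg)
  finally show ?thesis .
qed

lemma cg_eq: "a = b \<Longrightarrow> cong R a b" by (simp add: cong.refl)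

lemma equivp_pw: "equivp (\<lambda>f g. \<forall>h::real. cong (R h) (f h) (g h))"
  by (rule equivpI; auto simp: reflp_def symp_def transp_def intro: cong.intros)

lemma cg_neg_l: "cong R (Pl (Tm (C (-1)) a) a) (C 0)"
  by (meson cong.pl_comm cong.pl_neg cong.trans)

lemma cg_zero_r: "cong R (Tm (C r) (C 0)) (C 0)"
  by (meson cong.c_central cg_zero_l cong.trans)

lemma cg_diff: "cong R (Pl a (Tm (C (-1)) b)) (Pl a (Tm (C (-1)) b))" by (rule cong.refl)


quotient_type qt = "real \<Rightarrow> fexp" / "\<lambda>f g. \<forall>h. eqT h (f h) (g h)"
  unfolding eqT_def by (rule equivp_pw)

instantiation qt :: ring
begin
lift_definition zero_qt :: qt is "\<lambda>h. C 0" .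
lift_definition plus_qt :: "qt \<Rightarrow> qt \<Rightarrow> qt" is "\<lambda>f g h. Pl (f h) (g h)"
  unfolding eqT_def by (auto intro: cong.pl_cong)
lift_definition uminus_qt :: "qt \<Rightarrow> qt" is "\<lambda>f h. Tm (C (-1)) (f h)"
  unfolding eqT_def by (auto intro: cong.tm_cong cong.refl)
lift_definition minus_qt :: "qt \<Rightarrow> qt \<Rightarrow> qt" is "\<lambda>f g h. Pl (f h) (Tm (C (-1)) (g h))"
  unfolding eqT_def by (auto intro: cong.pl_cong cong.tm_cong cong.refl)
lift_definition times_qt :: "qt \<Rightarrow> qt \<Rightarrow> qt" is "\<lambda>f g h. Tm (f h) (g h)"
  unfolding eqT_def by (auto intro: cong.tm_cong)
instance proof
  fix a b c :: qt
  show "a + b + c = a + (b + c)" by transfer (simp add: eqT_def cong.pl_assoc)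
  show "a + b = b + a" by transfer (simp add: eqT_def cong.pl_comm)
  show "0 + a = a" by transfer (simp add: eqT_def cong.pl_zero)
  show "- a + a = 0" by transfer (simp add: eqT_def cg_neg_l)
  show "a - b = a + - b" by transfer (simp add: eqT_def cong.refl)
  show "a * b * c = a * (b * c)" by transfer (simp add: eqT_def cong.tm_assoc)
  show "(a + b) * c = a * c + b * c" by transfer (simp add: eqT_def cong.distr)
  show "a * (b + c) = a * b + a * c" by transfer (simp add: eqT_def cong.distl)
qed
end

lift_definition qCt :: "(real \<Rightarrow> real) \<Rightarrow> qt" is "\<lambda>f h. C (f h)" .

lemma abst_Pl: "abs_qt (\<lambda>h. Pl (f h) (g h)) = abs_qt f + abs_qt g"
  by (simp add: plus_qt.abs_eq)
lemma abst_Tm: "abs_qt (\<lambda>h. Tm (f h) (g h)) = abs_qt f * abs_qt g"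
  by (simp add: times_qt.abs_eq)
lemma abst_C: "abs_qt (\<lambda>h. C (f h)) = qCt f"
  by (simp add: qCt.abs_eq)
lemma abst_mn: "abs_qt (\<lambda>h. mn (f h) (g h)) = abs_qt f - abs_qt g"
  unfolding mn_def by (simp add: minus_qt.abs_eq)
lemma abst_sm: "abs_qt (\<lambda>h. sm (r h) (g h)) = qCt r * abs_qt g"
  unfolding sm_def by (simp add: times_qt.abs_eq qCt.abs_eq)
lemma abst_sm_const: "abs_qt (\<lambda>h. sm r (g h)) = qCt (\<lambda>_. r) * abs_qt g"
  unfolding sm_def by (simp add: times_qt.abs_eq qCt.abs_eq)
lemma abst_Tm_const_l: "abs_qt (\<lambda>h. Tm a (g h)) = abs_qt (\<lambda>_. a) * abs_qt g"
  by (simp add: times_qt.abs_eq)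

lemma qCt_add: "qCt f + qCt g = qCt (\<lambda>h. f h + g h)"
  by transfer (simp add: eqT_def cong.c_add)
lemma qCt_mult: "qCt f * qCt g = qCt (\<lambda>h. f h * g h)"
  by transfer (simp add: eqT_def cong.c_mul)
lemma qCt_comm: "qCt f * a = a * qCt f"
  by transfer (simp add: eqT_def cong.c_central)
lemma qCt_one: "qCt (\<lambda>_. 1) * a = a"
  by transfer (simp add: eqT_def cong.tm_one_l)
lemma qCt_mone: "qCt (\<lambda>_. -1) * a = - a"
  by transfer (simp add: eqT_def cong.refl)
lemma qCt_zero: "qCt (\<lambda>_. 0) = 0"
  by transfer (simp add: eqT_def cong.refl)

lemma eqtI: "abs_qt f = abs_qt g \<Longrightarrow> eqT h (f h) (g h)"
  by (simp add: qt.abs_eq_iff)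

definition selt :: "real \<Rightarrow> fexp \<Rightarrow> qt" where
  "selt h a = abs_qt (\<lambda>h'. if h' = h then a else C 0)"

lemma selt_eq: "selt h a = selt h b \<longleftrightarrow> eqT h a b"
  unfolding selt_def qt.abs_eq_iff
  by (metis (full_types) eqT_def cong.refl)
lemma selt_Pl: "selt h (Pl a b) = selt h a + selt h b"
  unfolding selt_def plus_qt.abs_eq qt.abs_eq_iff
  by (auto simp: eqT_def cong.refl intro: cong.sym cong.pl_zero)
lemma selt_Tm: "selt h (Tm a b) = selt h a * selt h b"
  unfolding selt_def times_qt.abs_eq qt.abs_eq_iff
  by (auto simp: eqT_def cong.refl intro: cong.sym cg_zero_l)
lemma selt_C0: "selt h (C 0) = 0"
  unfolding selt_def zero_qt_def by (simp add: cong.refl)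
lemma selt_TmC: "selt h (Tm (C r) a) = qCt (\<lambda>_. r) * selt h a"
  unfolding selt_def times_qt.abs_eq qCt.abs_eq qt.abs_eq_iff
  by (auto simp: eqT_def cong.refl intro: cong.sym cg_zero_r)
lemma selt_mn: "selt h (mn a b) = selt h a - selt h b"
  unfolding mn_def selt_Pl selt_TmC by (simp add: qCt_mone)
lemma selt_sm: "selt h (sm r a) = qCt (\<lambda>_. r) * selt h a"
  unfolding sm_def by (rule selt_TmC)
lemma selt_abs: "abs_qt F1 = abs_qt F2 \<Longrightarrow> selt h (F1 h) = selt h (F2 h)"
  unfolding selt_eq by (simp add: qt.abs_eq_iff)
lemma selt_Cm: "selt h (C r) * selt h a = qCt (\<lambda>_. r) * selt h a"
  "selt h (C r) * (selt h a * z) = qCt (\<lambda>_. r) * (selt h a * z)"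
proof -
  show 1: "selt h (C r) * selt h a = qCt (\<lambda>_. r) * selt h a"
    unfolding selt_Tm[symmetric] selt_TmC[symmetric] ..
  show "selt h (C r) * (selt h a * z) = qCt (\<lambda>_. r) * (selt h a * z)"
    by (simp add: mult.assoc[symmetric] 1)
qed
lemmas selt_push = selt_Cm selt_Pl selt_Tm selt_C0 selt_TmC selt_mn selt_sm qCt_mone qCt_one

quotient_type qo = "real \<Rightarrow> fexp" / "\<lambda>f g. \<forall>h. eqO h (f h) (g h)"
  unfolding eqO_def by (rule equivp_pw)

instantiation qo :: ring
begin
lift_definition zero_qo :: qo is "\<lambda>h. C 0" .
lift_definition plus_qo :: "qo \<Rightarrow> qo \<Rightarrow> qo" is "\<lambda>f g h. Pl (f h) (g h)"
  unfolding eqO_def by (auto intro: cong.pl_cong)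
lift_definition uminus_qo :: "qo \<Rightarrow> qo" is "\<lambda>f h. Tm (C (-1)) (f h)"
  unfolding eqO_def by (auto intro: cong.tm_cong cong.refl)
lift_definition minus_qo :: "qo \<Rightarrow> qo \<Rightarrow> qo" is "\<lambda>f g h. Pl (f h) (Tm (C (-1)) (g h))"
  unfolding eqO_def by (auto intro: cong.pl_cong cong.tm_cong cong.refl)
lift_definition times_qo :: "qo \<Rightarrow> qo \<Rightarrow> qo" is "\<lambda>f g h. Tm (f h) (g h)"
  unfolding eqO_def by (auto intro: cong.tm_cong)
instance proof
  fix a b c :: qo
  show "a + b + c = a + (b + c)" by transfer (simp add: eqO_def cong.pl_assoc)
  show "a + b = b + a" by transfer (simp add: eqO_def cong.pl_comm)
  show "0 + a = a" by transfer (simp add: eqO_def cong.pl_zero)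
  show "- a + a = 0" by transfer (simp add: eqO_def cg_neg_l)
  show "a - b = a + - b" by transfer (simp add: eqO_def cong.refl)
  show "a * b * c = a * (b * c)" by transfer (simp add: eqO_def cong.tm_assoc)
  show "(a + b) * c = a * c + b * c" by transfer (simp add: eqO_def cong.distr)
  show "a * (b + c) = a * b + a * c" by transfer (simp add: eqO_def cong.distl)
qed
end

lift_definition qCo :: "(real \<Rightarrow> real) \<Rightarrow> qo" is "\<lambda>f h. C (f h)" .

lemma abso_Pl: "abs_qo (\<lambda>h. Pl (f h) (g h)) = abs_qo f + abs_qo g"
  by (simp add: plus_qo.abs_eq)
lemma abso_Tm: "abs_qo (\<lambda>h. Tm (f h) (g h)) = abs_qo f * abs_qo g"
  by (simp add: times_qo.abs_eq)
lemma abso_C: "abs_qo (\<lambda>h. C (f h)) = qCo f"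
  by (simp add: qCo.abs_eq)
lemma abso_mn: "abs_qo (\<lambda>h. mn (f h) (g h)) = abs_qo f - abs_qo g"
  unfolding mn_def by (simp add: minus_qo.abs_eq)
lemma abso_sm: "abs_qo (\<lambda>h. sm (r h) (g h)) = qCo r * abs_qo g"
  unfolding sm_def by (simp add: times_qo.abs_eq qCo.abs_eq)
lemma abso_sm_const: "abs_qo (\<lambda>h. sm r (g h)) = qCo (\<lambda>_. r) * abs_qo g"
  unfolding sm_def by (simp add: times_qo.abs_eq qCo.abs_eq)
lemma abso_Tm_const_l: "abs_qo (\<lambda>h. Tm a (g h)) = abs_qo (\<lambda>_. a) * abs_qo g"
  by (simp add: times_qo.abs_eq)

lemma qCo_add: "qCo f + qCo g = qCo (\<lambda>h. f h + g h)"
  by transfer (simp add: eqO_def cong.c_add)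
lemma qCo_mult: "qCo f * qCo g = qCo (\<lambda>h. f h * g h)"
  by transfer (simp add: eqO_def cong.c_mul)
lemma qCo_comm: "qCo f * a = a * qCo f"
  by transfer (simp add: eqO_def cong.c_central)
lemma qCo_one: "qCo (\<lambda>_. 1) * a = a"
  by transfer (simp add: eqO_def cong.tm_one_l)
lemma qCo_mone: "qCo (\<lambda>_. -1) * a = - a"
  by transfer (simp add: eqO_def cong.refl)
lemma qCo_zero: "qCo (\<lambda>_. 0) = 0"
  by transfer (simp add: eqO_def cong.refl)

lemma eqoI: "abs_qo f = abs_qo g \<Longrightarrow> eqO h (f h) (g h)"
  by (simp add: qo.abs_eq_iff)

definition selo :: "real \<Rightarrow> fexp \<Rightarrow> qo" where
  "selo h a = abs_qo (\<lambda>h'. if h' = h then a else C 0)"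

lemma selo_eq: "selo h a = selo h b \<longleftrightarrow> eqO h a b"
  unfolding selo_def qo.abs_eq_iff
  by (metis (full_types) eqO_def cong.refl)
lemma selo_Pl: "selo h (Pl a b) = selo h a + selo h b"
  unfolding selo_def plus_qo.abs_eq qo.abs_eq_iff
  by (auto simp: eqO_def cong.refl intro: cong.sym cong.pl_zero)
lemma selo_Tm: "selo h (Tm a b) = selo h a * selo h b"
  unfolding selo_def times_qo.abs_eq qo.abs_eq_iff
  by (auto simp: eqO_def cong.refl intro: cong.sym cg_zero_l)
lemma selo_C0: "selo h (C 0) = 0"
  unfolding selo_def zero_qo_def by (simp add: cong.refl)
lemma selo_TmC: "selo h (Tm (C r) a) = qCo (\<lambda>_. r) * selo h a"
  unfolding selo_def times_qo.abs_eq qCo.abs_eq qo.abs_eq_iff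
  by (auto simp: eqO_def cong.refl intro: cong.sym cg_zero_r)
lemma selo_mn: "selo h (mn a b) = selo h a - selo h b"
  unfolding mn_def selo_Pl selo_TmC by (simp add: qCo_mone)
lemma selo_sm: "selo h (sm r a) = qCo (\<lambda>_. r) * selo h a"
  unfolding sm_def by (rule selo_TmC)
lemma selo_abs: "abs_qo F1 = abs_qo F2 \<Longrightarrow> selo h (F1 h) = selo h (F2 h)"
  unfolding selo_eq by (simp add: qo.abs_eq_iff)
lemma selo_Cm: "selo h (C r) * selo h a = qCo (\<lambda>_. r) * selo h a"
  "selo h (C r) * (selo h a * z) = qCo (\<lambda>_. r) * (selo h a * z)"
proof -
  show 1: "selo h (C r) * selo h a = qCo (\<lambda>_. r) * selo h a"
    unfolding selo_Tm[symmetric] selo_TmC[symmetric] ..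
  show "selo h (C r) * (selo h a * z) = qCo (\<lambda>_. r) * (selo h a * z)"
    by (simp add: mult.assoc[symmetric] 1)
qed
lemmas selo_push = selo_Cm selo_Pl selo_Tm selo_C0 selo_TmC selo_mn selo_sm qCo_mone qCo_one


definition gt :: "gen \<Rightarrow> qt" where "gt g = abs_qt (\<lambda>h. G g)"
definition Kt :: "qt" where "Kt = qCt (\<lambda>h. h/2)"
lemma abst_G: "abs_qt (\<lambda>h. G g) = gt g" by (simp add: gt_def)
lemma Kt_comm: "Kt * a = a * Kt" unfolding Kt_def by (rule qCt_comm)
lemma Kt_g: "gt g * Kt = Kt * gt g" "gt g * (Kt * z) = Kt * (gt g * z)"
  by (metis Kt_comm mult.assoc)+
lemma convt:
  "qCt (\<lambda>h. h) = Kt + Kt" "qCt (\<lambda>h. -h) = -(Kt + Kt)"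
  "qCt (\<lambda>h. -h/2) = -Kt" "qCt (\<lambda>h. h/2) = Kt"
  "qCt (\<lambda>h. 2) * a = a + a" "qCt (\<lambda>h. -1) * a = - a" "qCt (\<lambda>h. 1) * a = a"
  "qCt (\<lambda>h. 0) = 0"
proof -
  show "qCt (\<lambda>h. h) = Kt + Kt" unfolding Kt_def qCt_add by simp
  show "qCt (\<lambda>h. -h) = -(Kt + Kt)" unfolding Kt_def qCt_add qCt_mone[symmetric] qCt_mult by simp
  show "qCt (\<lambda>h. -h/2) = -Kt" unfolding Kt_def qCt_mone[symmetric] qCt_mult by simp
  show "qCt (\<lambda>h. h/2) = Kt" unfolding Kt_def ..
  show "qCt (\<lambda>h. 2) * a = a + a"
  proof -
    have "qCt (\<lambda>h. 2) = qCt (\<lambda>h. 1) + qCt (\<lambda>h. 1)" by (simp add: qCt_add)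
    then show ?thesis by (simp add: distrib_right qCt_one)
  qed
  show "qCt (\<lambda>h. -1) * a = - a" by (rule qCt_mone)
  show "qCt (\<lambda>h. 1) * a = a" by (rule qCt_one)
  show "qCt (\<lambda>h. 0) = 0" by (rule qCt_zero)
qed
lemmas pusht = abst_Pl abst_Tm abst_C abst_mn abst_sm abst_sm_const abst_G
lemma rhot: "abs_qt (\<lambda>h. rho h) = (gt Th1 * (gt Xi2)) - (gt Th2 * (gt Xi1)) - (Kt * (gt Th2 * (gt Xi2))) + (gt Xx * (gt Eta))"
  unfolding rho_def by (simp add: pusht convt algebra_simps Kt_g)

lemma rawt_A1: "abs_qt (\<lambda>h. mn (Tm t1 xx) (Tm xx t1)) = abs_qt (\<lambda>h. sm (-h) (Tm xx t2))"
  by (rule qt.abs_eq_iff[THEN iffD2]) (simp add: eqT_def relA_def cong.rel)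
lemma rt_ax: "gt Th1 * (gt Xx) = (gt Xx * (gt Th1)) - (Kt * (gt Xx * (gt Th2))) - (Kt * (gt Xx * (gt Th2)))"
proof -
  note raw = rawt_A1[unfolded pusht convt rhot]
  have 1: "gt Th1 * (gt Xx) = ((- (Kt + Kt)) * (gt Xx * gt Th2)) + (gt Xx * gt Th1)" by (rule raw[unfolded diff_eq_eq])
  have 2: "((- (Kt + Kt)) * (gt Xx * gt Th2)) + (gt Xx * gt Th1) = (gt Xx * (gt Th1)) - (Kt * (gt Xx * (gt Th2))) - (Kt * (gt Xx * (gt Th2)))" by (simp add: algebra_simps Kt_g )
  from 1 2 show ?thesis by (rule HOL.trans)
qed
lemma rt_ax_z: "gt Th1 * (gt Xx * z) = (gt Xx * (gt Th1 * z)) - (Kt * (gt Xx * (gt Th2 * z))) - (Kt * (gt Xx * (gt Th2 * z)))"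
proof -
  have "gt Th1 * (gt Xx * z) = (gt Th1 * (gt Xx)) * z" by (simp add: mult.assoc)
  also have "\<dots> = ((gt Xx * (gt Th1)) - (Kt * (gt Xx * (gt Th2))) - (Kt * (gt Xx * (gt Th2)))) * z" by (simp only: rt_ax)
  also have "\<dots> = (gt Xx * (gt Th1 * z)) - (Kt * (gt Xx * (gt Th2 * z))) - (Kt * (gt Xx * (gt Th2 * z)))" by (simp add: algebra_simps)
  finally show ?thesis .
qed
lemma rawt_A2: "abs_qt (\<lambda>h. Pl (Tm t1 t2) (Tm t2 t1)) = abs_qt (\<lambda>h. C 0)"
  by (rule qt.abs_eq_iff[THEN iffD2]) (simp add: eqT_def relA_def cong.rel)
lemma rt_ba: "gt Th2 * (gt Th1) = - (gt Th1 * (gt Th2))"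
proof -
  note raw = rawt_A2[unfolded pusht convt rhot]
  have 1: "gt Th2 * (gt Th1) = - (gt Th1 * gt Th2)" by (rule minus_unique[OF raw, symmetric])
  have 2: "- (gt Th1 * gt Th2) = - (gt Th1 * (gt Th2))" by (simp add: algebra_simps Kt_g rt_ax rt_ax_z)
  from 1 2 show ?thesis by (rule HOL.trans)
qed
lemma rt_ba_z: "gt Th2 * (gt Th1 * z) = - (gt Th1 * (gt Th2 * z))"
proof -
  have "gt Th2 * (gt Th1 * z) = (gt Th2 * (gt Th1)) * z" by (simp add: mult.assoc)
  also have "\<dots> = (- (gt Th1 * (gt Th2))) * z" by (simp only: rt_ba)
  also have "\<dots> = - (gt Th1 * (gt Th2 * z))" by (simp add: algebra_simps)
  finally show ?thesis .
qed
lemma rawt_A3: "abs_qt (\<lambda>h. mn (Tm t2 xx) (Tm xx t2)) = abs_qt (\<lambda>h. C 0)"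
  by (rule qt.abs_eq_iff[THEN iffD2]) (simp add: eqT_def relA_def cong.rel)
lemma rt_bx: "gt Th2 * (gt Xx) = (gt Xx * (gt Th2))"
proof -
  note raw = rawt_A3[unfolded pusht convt rhot]
  have 1: "gt Th2 * (gt Xx) = 0 + (gt Xx * gt Th2)" by (rule raw[unfolded diff_eq_eq])
  have 2: "0 + (gt Xx * gt Th2) = (gt Xx * (gt Th2))" by (simp add: algebra_simps Kt_g rt_ax rt_ax_z rt_ba rt_ba_z)
  from 1 2 show ?thesis by (rule HOL.trans)
qed
lemma rt_bx_z: "gt Th2 * (gt Xx * z) = (gt Xx * (gt Th2 * z))"
proof -
  have "gt Th2 * (gt Xx * z) = (gt Th2 * (gt Xx)) * z" by (simp add: mult.assoc)
  also have "\<dots> = ((gt Xx * (gt Th2))) * z" by (simp only: rt_bx)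
  also have "\<dots> = (gt Xx * (gt Th2 * z))" by (simp add: algebra_simps)
  finally show ?thesis .
qed
lemma rawt_A4: "abs_qt (\<lambda>h. Tm t1 t1) = abs_qt (\<lambda>h. sm (-h/2) (mn (Tm xx xx) (sm 2 (Tm t1 t2))))"
  by (rule qt.abs_eq_iff[THEN iffD2]) (simp add: eqT_def relA_def cong.rel)
lemma rt_aa: "gt Th1 * (gt Th1) = (Kt * (gt Th1 * (gt Th2))) + (Kt * (gt Th1 * (gt Th2))) - (Kt * (gt Xx * (gt Xx)))"
proof -
  note raw = rawt_A4[unfolded pusht convt rhot]
  have 1: "gt Th1 * (gt Th1) = ((- Kt) * ((gt Xx * gt Xx) - ((gt Th1 * gt Th2) + (gt Th1 * gt Th2))))" by (rule raw)
  have 2: "((- Kt) * ((gt Xx * gt Xx) - ((gt Th1 * gt Th2) + (gt Th1 * gt Th2)))) = (Kt * (gt Th1 * (gt Th2))) + (Kt * (gt Th1 * (gt Th2))) - (Kt * (gt Xx * (gt Xx)))" by (simp add: algebra_simps Kt_g rt_ax rt_ax_z rt_ba rt_ba_z rt_bx rt_bx_z)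
  from 1 2 show ?thesis by (rule HOL.trans)
qed
lemma rt_aa_z: "gt Th1 * (gt Th1 * z) = (Kt * (gt Th1 * (gt Th2 * z))) + (Kt * (gt Th1 * (gt Th2 * z))) - (Kt * (gt Xx * (gt Xx * z)))"
proof -
  have "gt Th1 * (gt Th1 * z) = (gt Th1 * (gt Th1)) * z" by (simp add: mult.assoc)
  also have "\<dots> = ((Kt * (gt Th1 * (gt Th2))) + (Kt * (gt Th1 * (gt Th2))) - (Kt * (gt Xx * (gt Xx)))) * z" by (simp only: rt_aa)
  also have "\<dots> = (Kt * (gt Th1 * (gt Th2 * z))) + (Kt * (gt Th1 * (gt Th2 * z))) - (Kt * (gt Xx * (gt Xx * z)))" by (simp add: algebra_simps)
  finally show ?thesis .
qed
lemma rawt_A5: "abs_qt (\<lambda>h. Tm t2 t2) = abs_qt (\<lambda>h. C 0)"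
  by (rule qt.abs_eq_iff[THEN iffD2]) (simp add: eqT_def relA_def cong.rel)
lemma rt_bb: "gt Th2 * (gt Th2) = 0"
proof -
  note raw = rawt_A5[unfolded pusht convt rhot]
  have 1: "gt Th2 * (gt Th2) = 0" by (rule raw)
  have 2: "0 = 0" by (simp add: algebra_simps Kt_g rt_ax rt_ax_z rt_ba rt_ba_z rt_bx rt_bx_z rt_aa rt_aa_z)
  from 1 2 show ?thesis by (rule HOL.trans)
qed
lemma rt_bb_z: "gt Th2 * (gt Th2 * z) = 0"
proof -
  have "gt Th2 * (gt Th2 * z) = (gt Th2 * (gt Th2)) * z" by (simp add: mult.assoc)
  also have "\<dots> = (0) * z" by (simp only: rt_bb)
  also have "\<dots> = 0" by (simp add: algebra_simps)
  finally show ?thesis .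
qed
lemma rawt_B1: "abs_qt (\<lambda>h. mn (Tm t1 e1) (Tm e1 t1)) = abs_qt (\<lambda>h. sm h (rho h))"
  by (rule qt.abs_eq_iff[THEN iffD2]) (simp add: eqT_def relB_def cong.rel)
lemma rt_Ea: "gt Xi1 * (gt Th1) = (gt Th1 * (gt Xi1)) - (Kt * (gt Th1 * (gt Xi2))) - (Kt * (gt Th1 * (gt Xi2))) + (Kt * (gt Th2 * (gt Xi1))) + (Kt * (gt Th2 * (gt Xi1))) + (Kt * (Kt * (gt Th2 * (gt Xi2)))) + (Kt * (Kt * (gt Th2 * (gt Xi2)))) - (Kt * (gt Xx * (gt Eta))) - (Kt * (gt Xx * (gt Eta)))"
proof -
  note raw = rawt_B1[unfolded pusht convt rhot]
  have 1: "gt Xi1 * (gt Th1) = (gt Th1 * gt Xi1) - (((Kt + Kt)) * ((gt Th1 * (gt Xi2)) - (gt Th2 * (gt Xi1)) - (Kt * (gt Th2 * (gt Xi2))) + (gt Xx * (gt Eta))))" by (subst raw[symmetric]) simp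
  have 2: "(gt Th1 * gt Xi1) - (((Kt + Kt)) * ((gt Th1 * (gt Xi2)) - (gt Th2 * (gt Xi1)) - (Kt * (gt Th2 * (gt Xi2))) + (gt Xx * (gt Eta)))) = (gt Th1 * (gt Xi1)) - (Kt * (gt Th1 * (gt Xi2))) - (Kt * (gt Th1 * (gt Xi2))) + (Kt * (gt Th2 * (gt Xi1))) + (Kt * (gt Th2 * (gt Xi1))) + (Kt * (Kt * (gt Th2 * (gt Xi2)))) + (Kt * (Kt * (gt Th2 * (gt Xi2)))) - (Kt * (gt Xx * (gt Eta))) - (Kt * (gt Xx * (gt Eta)))" by (simp add: algebra_simps Kt_g rt_ax rt_ax_z rt_ba rt_ba_z rt_bx rt_bx_z rt_aa rt_aa_z rt_bb rt_bb_z)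
  from 1 2 show ?thesis by (rule HOL.trans)
qed
lemma rt_Ea_z: "gt Xi1 * (gt Th1 * z) = (gt Th1 * (gt Xi1 * z)) - (Kt * (gt Th1 * (gt Xi2 * z))) - (Kt * (gt Th1 * (gt Xi2 * z))) + (Kt * (gt Th2 * (gt Xi1 * z))) + (Kt * (gt Th2 * (gt Xi1 * z))) + (Kt * (Kt * (gt Th2 * (gt Xi2 * z)))) + (Kt * (Kt * (gt Th2 * (gt Xi2 * z)))) - (Kt * (gt Xx * (gt Eta * z))) - (Kt * (gt Xx * (gt Eta * z)))"
proof -
  have "gt Xi1 * (gt Th1 * z) = (gt Xi1 * (gt Th1)) * z" by (simp add: mult.assoc)
  also have "\<dots> = ((gt Th1 * (gt Xi1)) - (Kt * (gt Th1 * (gt Xi2))) - (Kt * (gt Th1 * (gt Xi2))) + (Kt * (gt Th2 * (gt Xi1))) + (Kt * (gt Th2 * (gt Xi1))) + (Kt * (Kt * (gt Th2 * (gt Xi2)))) + (Kt * (Kt * (gt Th2 * (gt Xi2)))) - (Kt * (gt Xx * (gt Eta))) - (Kt * (gt Xx * (gt Eta)))) * z" by (simp only: rt_Ea)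
  also have "\<dots> = (gt Th1 * (gt Xi1 * z)) - (Kt * (gt Th1 * (gt Xi2 * z))) - (Kt * (gt Th1 * (gt Xi2 * z))) + (Kt * (gt Th2 * (gt Xi1 * z))) + (Kt * (gt Th2 * (gt Xi1 * z))) + (Kt * (Kt * (gt Th2 * (gt Xi2 * z)))) + (Kt * (Kt * (gt Th2 * (gt Xi2 * z)))) - (Kt * (gt Xx * (gt Eta * z))) - (Kt * (gt Xx * (gt Eta * z)))" by (simp add: algebra_simps)
  finally show ?thesis .
qed
lemma rawt_B2: "abs_qt (\<lambda>h. Pl (Tm t1 et) (Tm et t1)) = abs_qt (\<lambda>h. sm h (Tm xx e2))"
  by (rule qt.abs_eq_iff[THEN iffD2]) (simp add: eqT_def relB_def cong.rel)
lemma rt_Na: "gt Eta * (gt Th1) = - (gt Th1 * (gt Eta)) + (Kt * (gt Xx * (gt Xi2))) + (Kt * (gt Xx * (gt Xi2)))"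
proof -
  note raw = rawt_B2[unfolded pusht convt rhot]
  have 1: "gt Eta * (gt Th1) = (((Kt + Kt)) * (gt Xx * gt Xi2)) - (gt Th1 * gt Eta)" by (subst raw[symmetric]) simp
  have 2: "(((Kt + Kt)) * (gt Xx * gt Xi2)) - (gt Th1 * gt Eta) = - (gt Th1 * (gt Eta)) + (Kt * (gt Xx * (gt Xi2))) + (Kt * (gt Xx * (gt Xi2)))" by (simp add: algebra_simps Kt_g rt_ax rt_ax_z rt_ba rt_ba_z rt_bx rt_bx_z rt_aa rt_aa_z rt_bb rt_bb_z rt_Ea rt_Ea_z)
  from 1 2 show ?thesis by (rule HOL.trans)
qed
lemma rt_Na_z: "gt Eta * (gt Th1 * z) = - (gt Th1 * (gt Eta * z)) + (Kt * (gt Xx * (gt Xi2 * z))) + (Kt * (gt Xx * (gt Xi2 * z)))"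
proof -
  have "gt Eta * (gt Th1 * z) = (gt Eta * (gt Th1)) * z" by (simp add: mult.assoc)
  also have "\<dots> = (- (gt Th1 * (gt Eta)) + (Kt * (gt Xx * (gt Xi2))) + (Kt * (gt Xx * (gt Xi2)))) * z" by (simp only: rt_Na)
  also have "\<dots> = - (gt Th1 * (gt Eta * z)) + (Kt * (gt Xx * (gt Xi2 * z))) + (Kt * (gt Xx * (gt Xi2 * z)))" by (simp add: algebra_simps)
  finally show ?thesis .
qed
lemma rawt_B3: "abs_qt (\<lambda>h. mn (Tm t1 e2) (Tm e2 t1)) = abs_qt (\<lambda>h. sm h (Tm t2 e2))"
  by (rule qt.abs_eq_iff[THEN iffD2]) (simp add: eqT_def relB_def cong.rel)
lemma rt_Fa: "gt Xi2 * (gt Th1) = (gt Th1 * (gt Xi2)) - (Kt * (gt Th2 * (gt Xi2))) - (Kt * (gt Th2 * (gt Xi2)))"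
proof -
  note raw = rawt_B3[unfolded pusht convt rhot]
  have 1: "gt Xi2 * (gt Th1) = (gt Th1 * gt Xi2) - (((Kt + Kt)) * (gt Th2 * gt Xi2))" by (subst raw[symmetric]) simp
  have 2: "(gt Th1 * gt Xi2) - (((Kt + Kt)) * (gt Th2 * gt Xi2)) = (gt Th1 * (gt Xi2)) - (Kt * (gt Th2 * (gt Xi2))) - (Kt * (gt Th2 * (gt Xi2)))" by (simp add: algebra_simps Kt_g rt_ax rt_ax_z rt_ba rt_ba_z rt_bx rt_bx_z rt_aa rt_aa_z rt_bb rt_bb_z rt_Ea rt_Ea_z rt_Na rt_Na_z)
  from 1 2 show ?thesis by (rule HOL.trans)
qed
lemma rt_Fa_z: "gt Xi2 * (gt Th1 * z) = (gt Th1 * (gt Xi2 * z)) - (Kt * (gt Th2 * (gt Xi2 * z))) - (Kt * (gt Th2 * (gt Xi2 * z)))"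
proof -
  have "gt Xi2 * (gt Th1 * z) = (gt Xi2 * (gt Th1)) * z" by (simp add: mult.assoc)
  also have "\<dots> = ((gt Th1 * (gt Xi2)) - (Kt * (gt Th2 * (gt Xi2))) - (Kt * (gt Th2 * (gt Xi2)))) * z" by (simp only: rt_Fa)
  also have "\<dots> = (gt Th1 * (gt Xi2 * z)) - (Kt * (gt Th2 * (gt Xi2 * z))) - (Kt * (gt Th2 * (gt Xi2 * z)))" by (simp add: algebra_simps)
  finally show ?thesis .
qed
lemma rawt_B4: "abs_qt (\<lambda>h. mn (Tm xx e1) (Tm e1 xx)) = abs_qt (\<lambda>h. sm (-h) (Tm t2 et))"
  by (rule qt.abs_eq_iff[THEN iffD2]) (simp add: eqT_def relB_def cong.rel)
lemma rt_Ex: "gt Xi1 * (gt Xx) = (Kt * (gt Th2 * (gt Eta))) + (Kt * (gt Th2 * (gt Eta))) + (gt Xx * (gt Xi1))"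
proof -
  note raw = rawt_B4[unfolded pusht convt rhot]
  have 1: "gt Xi1 * (gt Xx) = (gt Xx * gt Xi1) - ((- (Kt + Kt)) * (gt Th2 * gt Eta))" by (subst raw[symmetric]) simp
  have 2: "(gt Xx * gt Xi1) - ((- (Kt + Kt)) * (gt Th2 * gt Eta)) = (Kt * (gt Th2 * (gt Eta))) + (Kt * (gt Th2 * (gt Eta))) + (gt Xx * (gt Xi1))" by (simp add: algebra_simps Kt_g rt_ax rt_ax_z rt_ba rt_ba_z rt_bx rt_bx_z rt_aa rt_aa_z rt_bb rt_bb_z rt_Ea rt_Ea_z rt_Na rt_Na_z rt_Fa rt_Fa_z)
  from 1 2 show ?thesis by (rule HOL.trans)
qed
lemma rt_Ex_z: "gt Xi1 * (gt Xx * z) = (Kt * (gt Th2 * (gt Eta * z))) + (Kt * (gt Th2 * (gt Eta * z))) + (gt Xx * (gt Xi1 * z))"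
proof -
  have "gt Xi1 * (gt Xx * z) = (gt Xi1 * (gt Xx)) * z" by (simp add: mult.assoc)
  also have "\<dots> = ((Kt * (gt Th2 * (gt Eta))) + (Kt * (gt Th2 * (gt Eta))) + (gt Xx * (gt Xi1))) * z" by (simp only: rt_Ex)
  also have "\<dots> = (Kt * (gt Th2 * (gt Eta * z))) + (Kt * (gt Th2 * (gt Eta * z))) + (gt Xx * (gt Xi1 * z))" by (simp add: algebra_simps)
  finally show ?thesis .
qed
lemma rawt_B5: "abs_qt (\<lambda>h. mn (Tm xx et) (Tm et xx)) = abs_qt (\<lambda>h. sm (-h) (Tm t2 e2))"
  by (rule qt.abs_eq_iff[THEN iffD2]) (simp add: eqT_def relB_def cong.rel)
lemma rt_Nx: "gt Eta * (gt Xx) = (Kt * (gt Th2 * (gt Xi2))) + (Kt * (gt Th2 * (gt Xi2))) + (gt Xx * (gt Eta))"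
proof -
  note raw = rawt_B5[unfolded pusht convt rhot]
  have 1: "gt Eta * (gt Xx) = (gt Xx * gt Eta) - ((- (Kt + Kt)) * (gt Th2 * gt Xi2))" by (subst raw[symmetric]) simp
  have 2: "(gt Xx * gt Eta) - ((- (Kt + Kt)) * (gt Th2 * gt Xi2)) = (Kt * (gt Th2 * (gt Xi2))) + (Kt * (gt Th2 * (gt Xi2))) + (gt Xx * (gt Eta))" by (simp add: algebra_simps Kt_g rt_ax rt_ax_z rt_ba rt_ba_z rt_bx rt_bx_z rt_aa rt_aa_z rt_bb rt_bb_z rt_Ea rt_Ea_z rt_Na rt_Na_z rt_Fa rt_Fa_z rt_Ex rt_Ex_z)
  from 1 2 show ?thesis by (rule HOL.trans)
qed
lemma rt_Nx_z: "gt Eta * (gt Xx * z) = (Kt * (gt Th2 * (gt Xi2 * z))) + (Kt * (gt Th2 * (gt Xi2 * z))) + (gt Xx * (gt Eta * z))"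
proof -
  have "gt Eta * (gt Xx * z) = (gt Eta * (gt Xx)) * z" by (simp add: mult.assoc)
  also have "\<dots> = ((Kt * (gt Th2 * (gt Xi2))) + (Kt * (gt Th2 * (gt Xi2))) + (gt Xx * (gt Eta))) * z" by (simp only: rt_Nx)
  also have "\<dots> = (Kt * (gt Th2 * (gt Xi2 * z))) + (Kt * (gt Th2 * (gt Xi2 * z))) + (gt Xx * (gt Eta * z))" by (simp add: algebra_simps)
  finally show ?thesis .
qed
lemma rawt_B6: "abs_qt (\<lambda>h. mn (Tm xx e2) (Tm e2 xx)) = abs_qt (\<lambda>h. C 0)"
  by (rule qt.abs_eq_iff[THEN iffD2]) (simp add: eqT_def relB_def cong.rel)
lemma rt_Fx: "gt Xi2 * (gt Xx) = (gt Xx * (gt Xi2))"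
proof -
  note raw = rawt_B6[unfolded pusht convt rhot]
  have 1: "gt Xi2 * (gt Xx) = (gt Xx * gt Xi2) - 0" by (subst raw[symmetric]) simp
  have 2: "(gt Xx * gt Xi2) - 0 = (gt Xx * (gt Xi2))" by (simp add: algebra_simps Kt_g rt_ax rt_ax_z rt_ba rt_ba_z rt_bx rt_bx_z rt_aa rt_aa_z rt_bb rt_bb_z rt_Ea rt_Ea_z rt_Na rt_Na_z rt_Fa rt_Fa_z rt_Ex rt_Ex_z rt_Nx rt_Nx_z)
  from 1 2 show ?thesis by (rule HOL.trans)
qed
lemma rt_Fx_z: "gt Xi2 * (gt Xx * z) = (gt Xx * (gt Xi2 * z))"
proof -
  have "gt Xi2 * (gt Xx * z) = (gt Xi2 * (gt Xx)) * z" by (simp add: mult.assoc)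
  also have "\<dots> = ((gt Xx * (gt Xi2))) * z" by (simp only: rt_Fx)
  also have "\<dots> = (gt Xx * (gt Xi2 * z))" by (simp add: algebra_simps)
  finally show ?thesis .
qed
lemma rawt_B7: "abs_qt (\<lambda>h. mn (Tm t2 e1) (Tm e1 t2)) = abs_qt (\<lambda>h. sm (-h) (Tm t2 e2))"
  by (rule qt.abs_eq_iff[THEN iffD2]) (simp add: eqT_def relB_def cong.rel)
lemma rt_Eb: "gt Xi1 * (gt Th2) = (gt Th2 * (gt Xi1)) + (Kt * (gt Th2 * (gt Xi2))) + (Kt * (gt Th2 * (gt Xi2)))"
proof -
  note raw = rawt_B7[unfolded pusht convt rhot]
  have 1: "gt Xi1 * (gt Th2) = (gt Th2 * gt Xi1) - ((- (Kt + Kt)) * (gt Th2 * gt Xi2))" by (subst raw[symmetric]) simp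
  have 2: "(gt Th2 * gt Xi1) - ((- (Kt + Kt)) * (gt Th2 * gt Xi2)) = (gt Th2 * (gt Xi1)) + (Kt * (gt Th2 * (gt Xi2))) + (Kt * (gt Th2 * (gt Xi2)))" by (simp add: algebra_simps Kt_g rt_ax rt_ax_z rt_ba rt_ba_z rt_bx rt_bx_z rt_aa rt_aa_z rt_bb rt_bb_z rt_Ea rt_Ea_z rt_Na rt_Na_z rt_Fa rt_Fa_z rt_Ex rt_Ex_z rt_Nx rt_Nx_z rt_Fx rt_Fx_z)
  from 1 2 show ?thesis by (rule HOL.trans)
qed
lemma rt_Eb_z: "gt Xi1 * (gt Th2 * z) = (gt Th2 * (gt Xi1 * z)) + (Kt * (gt Th2 * (gt Xi2 * z))) + (Kt * (gt Th2 * (gt Xi2 * z)))"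
proof -
  have "gt Xi1 * (gt Th2 * z) = (gt Xi1 * (gt Th2)) * z" by (simp add: mult.assoc)
  also have "\<dots> = ((gt Th2 * (gt Xi1)) + (Kt * (gt Th2 * (gt Xi2))) + (Kt * (gt Th2 * (gt Xi2)))) * z" by (simp only: rt_Eb)
  also have "\<dots> = (gt Th2 * (gt Xi1 * z)) + (Kt * (gt Th2 * (gt Xi2 * z))) + (Kt * (gt Th2 * (gt Xi2 * z)))" by (simp add: algebra_simps)
  finally show ?thesis .
qed
lemma rawt_B8: "abs_qt (\<lambda>h. Pl (Tm t2 et) (Tm et t2)) = abs_qt (\<lambda>h. C 0)"
  by (rule qt.abs_eq_iff[THEN iffD2]) (simp add: eqT_def relB_def cong.rel)
lemma rt_Nb: "gt Eta * (gt Th2) = - (gt Th2 * (gt Eta))"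
proof -
  note raw = rawt_B8[unfolded pusht convt rhot]
  have 1: "gt Eta * (gt Th2) = - (gt Th2 * gt Eta)" by (rule minus_unique[OF raw, symmetric])
  have 2: "- (gt Th2 * gt Eta) = - (gt Th2 * (gt Eta))" by (simp add: algebra_simps Kt_g rt_ax rt_ax_z rt_ba rt_ba_z rt_bx rt_bx_z rt_aa rt_aa_z rt_bb rt_bb_z rt_Ea rt_Ea_z rt_Na rt_Na_z rt_Fa rt_Fa_z rt_Ex rt_Ex_z rt_Nx rt_Nx_z rt_Fx rt_Fx_z rt_Eb rt_Eb_z)
  from 1 2 show ?thesis by (rule HOL.trans)
qed
lemma rt_Nb_z: "gt Eta * (gt Th2 * z) = - (gt Th2 * (gt Eta * z))"
proof -
  have "gt Eta * (gt Th2 * z) = (gt Eta * (gt Th2)) * z" by (simp add: mult.assoc)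
  also have "\<dots> = (- (gt Th2 * (gt Eta))) * z" by (simp only: rt_Nb)
  also have "\<dots> = - (gt Th2 * (gt Eta * z))" by (simp add: algebra_simps)
  finally show ?thesis .
qed
lemma rawt_B9: "abs_qt (\<lambda>h. mn (Tm t2 e2) (Tm e2 t2)) = abs_qt (\<lambda>h. C 0)"
  by (rule qt.abs_eq_iff[THEN iffD2]) (simp add: eqT_def relB_def cong.rel)
lemma rt_Fb: "gt Xi2 * (gt Th2) = (gt Th2 * (gt Xi2))"
proof -
  note raw = rawt_B9[unfolded pusht convt rhot]
  have 1: "gt Xi2 * (gt Th2) = (gt Th2 * gt Xi2) - 0" by (subst raw[symmetric]) simp
  have 2: "(gt Th2 * gt Xi2) - 0 = (gt Th2 * (gt Xi2))" by (simp add: algebra_simps Kt_g rt_ax rt_ax_z rt_ba rt_ba_z rt_bx rt_bx_z rt_aa rt_aa_z rt_bb rt_bb_z rt_Ea rt_Ea_z rt_Na rt_Na_z rt_Fa rt_Fa_z rt_Ex rt_Ex_z rt_Nx rt_Nx_z rt_Fx rt_Fx_z rt_Eb rt_Eb_z rt_Nb rt_Nb_z)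
  from 1 2 show ?thesis by (rule HOL.trans)
qed
lemma rt_Fb_z: "gt Xi2 * (gt Th2 * z) = (gt Th2 * (gt Xi2 * z))"
proof -
  have "gt Xi2 * (gt Th2 * z) = (gt Xi2 * (gt Th2)) * z" by (simp add: mult.assoc)
  also have "\<dots> = ((gt Th2 * (gt Xi2))) * z" by (simp only: rt_Fb)
  also have "\<dots> = (gt Th2 * (gt Xi2 * z))" by (simp add: algebra_simps)
  finally show ?thesis .
qed
lemmas NFt = rt_ax rt_ax_z rt_ba rt_ba_z rt_bx rt_bx_z rt_aa rt_aa_z rt_bb rt_bb_z rt_Ea rt_Ea_z rt_Na rt_Na_z rt_Fa rt_Fa_z rt_Ex rt_Ex_z rt_Nx rt_Nx_z rt_Fx rt_Fx_z rt_Eb rt_Eb_z rt_Nb rt_Nb_z rt_Fb rt_Fb_z Kt_g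
definition go :: "gen \<Rightarrow> qo" where "go g = abs_qo (\<lambda>h. G g)"
definition Ko :: "qo" where "Ko = qCo (\<lambda>h. h/2)"
lemma abso_G: "abs_qo (\<lambda>h. G g) = go g" by (simp add: go_def)
lemma Ko_comm: "Ko * a = a * Ko" unfolding Ko_def by (rule qCo_comm)
lemma Ko_g: "go g * Ko = Ko * go g" "go g * (Ko * z) = Ko * (go g * z)"
  by (metis Ko_comm mult.assoc)+
lemma convo:
  "qCo (\<lambda>h. h) = Ko + Ko" "qCo (\<lambda>h. -h) = -(Ko + Ko)"
  "qCo (\<lambda>h. -h/2) = -Ko" "qCo (\<lambda>h. h/2) = Ko"
  "qCo (\<lambda>h. 2) * a = a + a" "qCo (\<lambda>h. -1) * a = - a" "qCo (\<lambda>h. 1) * a = a"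
  "qCo (\<lambda>h. 0) = 0"
proof -
  show "qCo (\<lambda>h. h) = Ko + Ko" unfolding Ko_def qCo_add by simp
  show "qCo (\<lambda>h. -h) = -(Ko + Ko)" unfolding Ko_def qCo_add qCo_mone[symmetric] qCo_mult by simp
  show "qCo (\<lambda>h. -h/2) = -Ko" unfolding Ko_def qCo_mone[symmetric] qCo_mult by simp
  show "qCo (\<lambda>h. h/2) = Ko" unfolding Ko_def ..
  show "qCo (\<lambda>h. 2) * a = a + a"
  proof -
    have "qCo (\<lambda>h. 2) = qCo (\<lambda>h. 1) + qCo (\<lambda>h. 1)" by (simp add: qCo_add)
    then show ?thesis by (simp add: distrib_right qCo_one)
  qed
  show "qCo (\<lambda>h. -1) * a = - a" by (rule qCo_mone)
  show "qCo (\<lambda>h. 1) * a = a" by (rule qCo_one)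
  show "qCo (\<lambda>h. 0) = 0" by (rule qCo_zero)
qed
lemmas pusho = abso_Pl abso_Tm abso_C abso_mn abso_sm abso_sm_const abso_G
lemma rhoo: "abs_qo (\<lambda>h. rho h) = (go Th1 * (go Xi2)) - (go Th2 * (go Xi1)) - (Ko * (go Th2 * (go Xi2))) + (go Xx * (go Eta))"
  unfolding rho_def by (simp add: pusho convo algebra_simps Ko_g)

lemma rawo_A1: "abs_qo (\<lambda>h. mn (Tm t1 xx) (Tm xx t1)) = abs_qo (\<lambda>h. sm (-h) (Tm xx t2))"
  by (rule qo.abs_eq_iff[THEN iffD2]) (simp add: eqO_def relA_def cong.rel)
lemma ro_ax: "go Th1 * (go Xx) = (go Xx * (go Th1)) - (Ko * (go Xx * (go Th2))) - (Ko * (go Xx * (go Th2)))"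
proof -
  note raw = rawo_A1[unfolded pusho convo rhoo]
  have 1: "go Th1 * (go Xx) = ((- (Ko + Ko)) * (go Xx * go Th2)) + (go Xx * go Th1)" by (rule raw[unfolded diff_eq_eq])
  have 2: "((- (Ko + Ko)) * (go Xx * go Th2)) + (go Xx * go Th1) = (go Xx * (go Th1)) - (Ko * (go Xx * (go Th2))) - (Ko * (go Xx * (go Th2)))" by (simp add: algebra_simps Ko_g )
  from 1 2 show ?thesis by (rule HOL.trans)
qed
lemma ro_ax_z: "go Th1 * (go Xx * z) = (go Xx * (go Th1 * z)) - (Ko * (go Xx * (go Th2 * z))) - (Ko * (go Xx * (go Th2 * z)))"
proof -
  have "go Th1 * (go Xx * z) = (go Th1 * (go Xx)) * z" by (simp add: mult.assoc)
  also have "\<dots> = ((go Xx * (go Th1)) - (Ko * (go Xx * (go Th2))) - (Ko * (go Xx * (go Th2)))) * z" by (simp only: ro_ax)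
  also have "\<dots> = (go Xx * (go Th1 * z)) - (Ko * (go Xx * (go Th2 * z))) - (Ko * (go Xx * (go Th2 * z)))" by (simp add: algebra_simps)
  finally show ?thesis .
qed
lemma rawo_A2: "abs_qo (\<lambda>h. Pl (Tm t1 t2) (Tm t2 t1)) = abs_qo (\<lambda>h. C 0)"
  by (rule qo.abs_eq_iff[THEN iffD2]) (simp add: eqO_def relA_def cong.rel)
lemma ro_ba: "go Th2 * (go Th1) = - (go Th1 * (go Th2))"
proof -
  note raw = rawo_A2[unfolded pusho convo rhoo]
  have 1: "go Th2 * (go Th1) = - (go Th1 * go Th2)" by (rule minus_unique[OF raw, symmetric])
  have 2: "- (go Th1 * go Th2) = - (go Th1 * (go Th2))" by (simp add: algebra_simps Ko_g ro_ax ro_ax_z)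
  from 1 2 show ?thesis by (rule HOL.trans)
qed
lemma ro_ba_z: "go Th2 * (go Th1 * z) = - (go Th1 * (go Th2 * z))"
proof -
  have "go Th2 * (go Th1 * z) = (go Th2 * (go Th1)) * z" by (simp add: mult.assoc)
  also have "\<dots> = (- (go Th1 * (go Th2))) * z" by (simp only: ro_ba)
  also have "\<dots> = - (go Th1 * (go Th2 * z))" by (simp add: algebra_simps)
  finally show ?thesis .
qed
lemma rawo_A3: "abs_qo (\<lambda>h. mn (Tm t2 xx) (Tm xx t2)) = abs_qo (\<lambda>h. C 0)"
  by (rule qo.abs_eq_iff[THEN iffD2]) (simp add: eqO_def relA_def cong.rel)
lemma ro_bx: "go Th2 * (go Xx) = (go Xx * (go Th2))"
proof -
  note raw = rawo_A3[unfolded pusho convo rhoo]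
  have 1: "go Th2 * (go Xx) = 0 + (go Xx * go Th2)" by (rule raw[unfolded diff_eq_eq])
  have 2: "0 + (go Xx * go Th2) = (go Xx * (go Th2))" by (simp add: algebra_simps Ko_g ro_ax ro_ax_z ro_ba ro_ba_z)
  from 1 2 show ?thesis by (rule HOL.trans)
qed
lemma ro_bx_z: "go Th2 * (go Xx * z) = (go Xx * (go Th2 * z))"
proof -
  have "go Th2 * (go Xx * z) = (go Th2 * (go Xx)) * z" by (simp add: mult.assoc)
  also have "\<dots> = ((go Xx * (go Th2))) * z" by (simp only: ro_bx)
  also have "\<dots> = (go Xx * (go Th2 * z))" by (simp add: algebra_simps)
  finally show ?thesis .
qed
lemma rawo_A4: "abs_qo (\<lambda>h. Tm t1 t1) = abs_qo (\<lambda>h. sm (-h/2) (mn (Tm xx xx) (sm 2 (Tm t1 t2))))"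
  by (rule qo.abs_eq_iff[THEN iffD2]) (simp add: eqO_def relA_def cong.rel)
lemma ro_aa: "go Th1 * (go Th1) = (Ko * (go Th1 * (go Th2))) + (Ko * (go Th1 * (go Th2))) - (Ko * (go Xx * (go Xx)))"
proof -
  note raw = rawo_A4[unfolded pusho convo rhoo]
  have 1: "go Th1 * (go Th1) = ((- Ko) * ((go Xx * go Xx) - ((go Th1 * go Th2) + (go Th1 * go Th2))))" by (rule raw)
  have 2: "((- Ko) * ((go Xx * go Xx) - ((go Th1 * go Th2) + (go Th1 * go Th2)))) = (Ko * (go Th1 * (go Th2))) + (Ko * (go Th1 * (go Th2))) - (Ko * (go Xx * (go Xx)))" by (simp add: algebra_simps Ko_g ro_ax ro_ax_z ro_ba ro_ba_z ro_bx ro_bx_z)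
  from 1 2 show ?thesis by (rule HOL.trans)
qed
lemma ro_aa_z: "go Th1 * (go Th1 * z) = (Ko * (go Th1 * (go Th2 * z))) + (Ko * (go Th1 * (go Th2 * z))) - (Ko * (go Xx * (go Xx * z)))"
proof -
  have "go Th1 * (go Th1 * z) = (go Th1 * (go Th1)) * z" by (simp add: mult.assoc)
  also have "\<dots> = ((Ko * (go Th1 * (go Th2))) + (Ko * (go Th1 * (go Th2))) - (Ko * (go Xx * (go Xx)))) * z" by (simp only: ro_aa)
  also have "\<dots> = (Ko * (go Th1 * (go Th2 * z))) + (Ko * (go Th1 * (go Th2 * z))) - (Ko * (go Xx * (go Xx * z)))" by (simp add: algebra_simps)
  finally show ?thesis .
qed
lemma rawo_A5: "abs_qo (\<lambda>h. Tm t2 t2) = abs_qo (\<lambda>h. C 0)"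
  by (rule qo.abs_eq_iff[THEN iffD2]) (simp add: eqO_def relA_def cong.rel)
lemma ro_bb: "go Th2 * (go Th2) = 0"
proof -
  note raw = rawo_A5[unfolded pusho convo rhoo]
  have 1: "go Th2 * (go Th2) = 0" by (rule raw)
  have 2: "0 = 0" by (simp add: algebra_simps Ko_g ro_ax ro_ax_z ro_ba ro_ba_z ro_bx ro_bx_z ro_aa ro_aa_z)
  from 1 2 show ?thesis by (rule HOL.trans)
qed
lemma ro_bb_z: "go Th2 * (go Th2 * z) = 0"
proof -
  have "go Th2 * (go Th2 * z) = (go Th2 * (go Th2)) * z" by (simp add: mult.assoc)
  also have "\<dots> = (0) * z" by (simp only: ro_bb)
  also have "\<dots> = 0" by (simp add: algebra_simps)
  finally show ?thesis .
qed
lemma rawo_B1: "abs_qo (\<lambda>h. mn (Tm t1 e1) (Tm e1 t1)) = abs_qo (\<lambda>h. sm h (rho h))"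
  by (rule qo.abs_eq_iff[THEN iffD2]) (simp add: eqO_def relB_def cong.rel)
lemma ro_Ea: "go Xi1 * (go Th1) = (go Th1 * (go Xi1)) - (Ko * (go Th1 * (go Xi2))) - (Ko * (go Th1 * (go Xi2))) + (Ko * (go Th2 * (go Xi1))) + (Ko * (go Th2 * (go Xi1))) + (Ko * (Ko * (go Th2 * (go Xi2)))) + (Ko * (Ko * (go Th2 * (go Xi2)))) - (Ko * (go Xx * (go Eta))) - (Ko * (go Xx * (go Eta)))"
proof -
  note raw = rawo_B1[unfolded pusho convo rhoo]
  have 1: "go Xi1 * (go Th1) = (go Th1 * go Xi1) - (((Ko + Ko)) * ((go Th1 * (go Xi2)) - (go Th2 * (go Xi1)) - (Ko * (go Th2 * (go Xi2))) + (go Xx * (go Eta))))" by (subst raw[symmetric]) simp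
  have 2: "(go Th1 * go Xi1) - (((Ko + Ko)) * ((go Th1 * (go Xi2)) - (go Th2 * (go Xi1)) - (Ko * (go Th2 * (go Xi2))) + (go Xx * (go Eta)))) = (go Th1 * (go Xi1)) - (Ko * (go Th1 * (go Xi2))) - (Ko * (go Th1 * (go Xi2))) + (Ko * (go Th2 * (go Xi1))) + (Ko * (go Th2 * (go Xi1))) + (Ko * (Ko * (go Th2 * (go Xi2)))) + (Ko * (Ko * (go Th2 * (go Xi2)))) - (Ko * (go Xx * (go Eta))) - (Ko * (go Xx * (go Eta)))" by (simp add: algebra_simps Ko_g ro_ax ro_ax_z ro_ba ro_ba_z ro_bx ro_bx_z ro_aa ro_aa_z ro_bb ro_bb_z)
  from 1 2 show ?thesis by (rule HOL.trans)
qed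
lemma ro_Ea_z: "go Xi1 * (go Th1 * z) = (go Th1 * (go Xi1 * z)) - (Ko * (go Th1 * (go Xi2 * z))) - (Ko * (go Th1 * (go Xi2 * z))) + (Ko * (go Th2 * (go Xi1 * z))) + (Ko * (go Th2 * (go Xi1 * z))) + (Ko * (Ko * (go Th2 * (go Xi2 * z)))) + (Ko * (Ko * (go Th2 * (go Xi2 * z)))) - (Ko * (go Xx * (go Eta * z))) - (Ko * (go Xx * (go Eta * z)))"
proof -
  have "go Xi1 * (go Th1 * z) = (go Xi1 * (go Th1)) * z" by (simp add: mult.assoc)
  also have "\<dots> = ((go Th1 * (go Xi1)) - (Ko * (go Th1 * (go Xi2))) - (Ko * (go Th1 * (go Xi2))) + (Ko * (go Th2 * (go Xi1))) + (Ko * (go Th2 * (go Xi1))) + (Ko * (Ko * (go Th2 * (go Xi2)))) + (Ko * (Ko * (go Th2 * (go Xi2)))) - (Ko * (go Xx * (go Eta))) - (Ko * (go Xx * (go Eta)))) * z" by (simp only: ro_Ea)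
  also have "\<dots> = (go Th1 * (go Xi1 * z)) - (Ko * (go Th1 * (go Xi2 * z))) - (Ko * (go Th1 * (go Xi2 * z))) + (Ko * (go Th2 * (go Xi1 * z))) + (Ko * (go Th2 * (go Xi1 * z))) + (Ko * (Ko * (go Th2 * (go Xi2 * z)))) + (Ko * (Ko * (go Th2 * (go Xi2 * z)))) - (Ko * (go Xx * (go Eta * z))) - (Ko * (go Xx * (go Eta * z)))" by (simp add: algebra_simps)
  finally show ?thesis .
qed
lemma rawo_B2: "abs_qo (\<lambda>h. Pl (Tm t1 et) (Tm et t1)) = abs_qo (\<lambda>h. sm h (Tm xx e2))"
  by (rule qo.abs_eq_iff[THEN iffD2]) (simp add: eqO_def relB_def cong.rel)
lemma ro_Na: "go Eta * (go Th1) = - (go Th1 * (go Eta)) + (Ko * (go Xx * (go Xi2))) + (Ko * (go Xx * (go Xi2)))"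
proof -
  note raw = rawo_B2[unfolded pusho convo rhoo]
  have 1: "go Eta * (go Th1) = (((Ko + Ko)) * (go Xx * go Xi2)) - (go Th1 * go Eta)" by (subst raw[symmetric]) simp
  have 2: "(((Ko + Ko)) * (go Xx * go Xi2)) - (go Th1 * go Eta) = - (go Th1 * (go Eta)) + (Ko * (go Xx * (go Xi2))) + (Ko * (go Xx * (go Xi2)))" by (simp add: algebra_simps Ko_g ro_ax ro_ax_z ro_ba ro_ba_z ro_bx ro_bx_z ro_aa ro_aa_z ro_bb ro_bb_z ro_Ea ro_Ea_z)
  from 1 2 show ?thesis by (rule HOL.trans)
qed
lemma ro_Na_z: "go Eta * (go Th1 * z) = - (go Th1 * (go Eta * z)) + (Ko * (go Xx * (go Xi2 * z))) + (Ko * (go Xx * (go Xi2 * z)))"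
proof -
  have "go Eta * (go Th1 * z) = (go Eta * (go Th1)) * z" by (simp add: mult.assoc)
  also have "\<dots> = (- (go Th1 * (go Eta)) + (Ko * (go Xx * (go Xi2))) + (Ko * (go Xx * (go Xi2)))) * z" by (simp only: ro_Na)
  also have "\<dots> = - (go Th1 * (go Eta * z)) + (Ko * (go Xx * (go Xi2 * z))) + (Ko * (go Xx * (go Xi2 * z)))" by (simp add: algebra_simps)
  finally show ?thesis .
qed
lemma rawo_B3: "abs_qo (\<lambda>h. mn (Tm t1 e2) (Tm e2 t1)) = abs_qo (\<lambda>h. sm h (Tm t2 e2))"
  by (rule qo.abs_eq_iff[THEN iffD2]) (simp add: eqO_def relB_def cong.rel)
lemma ro_Fa: "go Xi2 * (go Th1) = (go Th1 * (go Xi2)) - (Ko * (go Th2 * (go Xi2))) - (Ko * (go Th2 * (go Xi2)))"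
proof -
  note raw = rawo_B3[unfolded pusho convo rhoo]
  have 1: "go Xi2 * (go Th1) = (go Th1 * go Xi2) - (((Ko + Ko)) * (go Th2 * go Xi2))" by (subst raw[symmetric]) simp
  have 2: "(go Th1 * go Xi2) - (((Ko + Ko)) * (go Th2 * go Xi2)) = (go Th1 * (go Xi2)) - (Ko * (go Th2 * (go Xi2))) - (Ko * (go Th2 * (go Xi2)))" by (simp add: algebra_simps Ko_g ro_ax ro_ax_z ro_ba ro_ba_z ro_bx ro_bx_z ro_aa ro_aa_z ro_bb ro_bb_z ro_Ea ro_Ea_z ro_Na ro_Na_z)
  from 1 2 show ?thesis by (rule HOL.trans)
qed
lemma ro_Fa_z: "go Xi2 * (go Th1 * z) = (go Th1 * (go Xi2 * z)) - (Ko * (go Th2 * (go Xi2 * z))) - (Ko * (go Th2 * (go Xi2 * z)))"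
proof -
  have "go Xi2 * (go Th1 * z) = (go Xi2 * (go Th1)) * z" by (simp add: mult.assoc)
  also have "\<dots> = ((go Th1 * (go Xi2)) - (Ko * (go Th2 * (go Xi2))) - (Ko * (go Th2 * (go Xi2)))) * z" by (simp only: ro_Fa)
  also have "\<dots> = (go Th1 * (go Xi2 * z)) - (Ko * (go Th2 * (go Xi2 * z))) - (Ko * (go Th2 * (go Xi2 * z)))" by (simp add: algebra_simps)
  finally show ?thesis .
qed
lemma rawo_B4: "abs_qo (\<lambda>h. mn (Tm xx e1) (Tm e1 xx)) = abs_qo (\<lambda>h. sm (-h) (Tm t2 et))"
  by (rule qo.abs_eq_iff[THEN iffD2]) (simp add: eqO_def relB_def cong.rel)
lemma ro_Ex: "go Xi1 * (go Xx) = (Ko * (go Th2 * (go Eta))) + (Ko * (go Th2 * (go Eta))) + (go Xx * (go Xi1))"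
proof -
  note raw = rawo_B4[unfolded pusho convo rhoo]
  have 1: "go Xi1 * (go Xx) = (go Xx * go Xi1) - ((- (Ko + Ko)) * (go Th2 * go Eta))" by (subst raw[symmetric]) simp
  have 2: "(go Xx * go Xi1) - ((- (Ko + Ko)) * (go Th2 * go Eta)) = (Ko * (go Th2 * (go Eta))) + (Ko * (go Th2 * (go Eta))) + (go Xx * (go Xi1))" by (simp add: algebra_simps Ko_g ro_ax ro_ax_z ro_ba ro_ba_z ro_bx ro_bx_z ro_aa ro_aa_z ro_bb ro_bb_z ro_Ea ro_Ea_z ro_Na ro_Na_z ro_Fa ro_Fa_z)
  from 1 2 show ?thesis by (rule HOL.trans)
qed
lemma ro_Ex_z: "go Xi1 * (go Xx * z) = (Ko * (go Th2 * (go Eta * z))) + (Ko * (go Th2 * (go Eta * z))) + (go Xx * (go Xi1 * z))"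
proof -
  have "go Xi1 * (go Xx * z) = (go Xi1 * (go Xx)) * z" by (simp add: mult.assoc)
  also have "\<dots> = ((Ko * (go Th2 * (go Eta))) + (Ko * (go Th2 * (go Eta))) + (go Xx * (go Xi1))) * z" by (simp only: ro_Ex)
  also have "\<dots> = (Ko * (go Th2 * (go Eta * z))) + (Ko * (go Th2 * (go Eta * z))) + (go Xx * (go Xi1 * z))" by (simp add: algebra_simps)
  finally show ?thesis .
qed
lemma rawo_B5: "abs_qo (\<lambda>h. mn (Tm xx et) (Tm et xx)) = abs_qo (\<lambda>h. sm (-h) (Tm t2 e2))"
  by (rule qo.abs_eq_iff[THEN iffD2]) (simp add: eqO_def relB_def cong.rel)
lemma ro_Nx: "go Eta * (go Xx) = (Ko * (go Th2 * (go Xi2))) + (Ko * (go Th2 * (go Xi2))) + (go Xx * (go Eta))"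
proof -
  note raw = rawo_B5[unfolded pusho convo rhoo]
  have 1: "go Eta * (go Xx) = (go Xx * go Eta) - ((- (Ko + Ko)) * (go Th2 * go Xi2))" by (subst raw[symmetric]) simp
  have 2: "(go Xx * go Eta) - ((- (Ko + Ko)) * (go Th2 * go Xi2)) = (Ko * (go Th2 * (go Xi2))) + (Ko * (go Th2 * (go Xi2))) + (go Xx * (go Eta))" by (simp add: algebra_simps Ko_g ro_ax ro_ax_z ro_ba ro_ba_z ro_bx ro_bx_z ro_aa ro_aa_z ro_bb ro_bb_z ro_Ea ro_Ea_z ro_Na ro_Na_z ro_Fa ro_Fa_z ro_Ex ro_Ex_z)
  from 1 2 show ?thesis by (rule HOL.trans)
qed
lemma ro_Nx_z: "go Eta * (go Xx * z) = (Ko * (go Th2 * (go Xi2 * z))) + (Ko * (go Th2 * (go Xi2 * z))) + (go Xx * (go Eta * z))"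
proof -
  have "go Eta * (go Xx * z) = (go Eta * (go Xx)) * z" by (simp add: mult.assoc)
  also have "\<dots> = ((Ko * (go Th2 * (go Xi2))) + (Ko * (go Th2 * (go Xi2))) + (go Xx * (go Eta))) * z" by (simp only: ro_Nx)
  also have "\<dots> = (Ko * (go Th2 * (go Xi2 * z))) + (Ko * (go Th2 * (go Xi2 * z))) + (go Xx * (go Eta * z))" by (simp add: algebra_simps)
  finally show ?thesis .
qed
lemma rawo_B6: "abs_qo (\<lambda>h. mn (Tm xx e2) (Tm e2 xx)) = abs_qo (\<lambda>h. C 0)"
  by (rule qo.abs_eq_iff[THEN iffD2]) (simp add: eqO_def relB_def cong.rel)
lemma ro_Fx: "go Xi2 * (go Xx) = (go Xx * (go Xi2))"
proof -
  note raw = rawo_B6[unfolded pusho convo rhoo]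
  have 1: "go Xi2 * (go Xx) = (go Xx * go Xi2) - 0" by (subst raw[symmetric]) simp
  have 2: "(go Xx * go Xi2) - 0 = (go Xx * (go Xi2))" by (simp add: algebra_simps Ko_g ro_ax ro_ax_z ro_ba ro_ba_z ro_bx ro_bx_z ro_aa ro_aa_z ro_bb ro_bb_z ro_Ea ro_Ea_z ro_Na ro_Na_z ro_Fa ro_Fa_z ro_Ex ro_Ex_z ro_Nx ro_Nx_z)
  from 1 2 show ?thesis by (rule HOL.trans)
qed
lemma ro_Fx_z: "go Xi2 * (go Xx * z) = (go Xx * (go Xi2 * z))"
proof -
  have "go Xi2 * (go Xx * z) = (go Xi2 * (go Xx)) * z" by (simp add: mult.assoc)
  also have "\<dots> = ((go Xx * (go Xi2))) * z" by (simp only: ro_Fx)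
  also have "\<dots> = (go Xx * (go Xi2 * z))" by (simp add: algebra_simps)
  finally show ?thesis .
qed
lemma rawo_B7: "abs_qo (\<lambda>h. mn (Tm t2 e1) (Tm e1 t2)) = abs_qo (\<lambda>h. sm (-h) (Tm t2 e2))"
  by (rule qo.abs_eq_iff[THEN iffD2]) (simp add: eqO_def relB_def cong.rel)
lemma ro_Eb: "go Xi1 * (go Th2) = (go Th2 * (go Xi1)) + (Ko * (go Th2 * (go Xi2))) + (Ko * (go Th2 * (go Xi2)))"
proof -
  note raw = rawo_B7[unfolded pusho convo rhoo]
  have 1: "go Xi1 * (go Th2) = (go Th2 * go Xi1) - ((- (Ko + Ko)) * (go Th2 * go Xi2))" by (subst raw[symmetric]) simp
  have 2: "(go Th2 * go Xi1) - ((- (Ko + Ko)) * (go Th2 * go Xi2)) = (go Th2 * (go Xi1)) + (Ko * (go Th2 * (go Xi2))) + (Ko * (go Th2 * (go Xi2)))" by (simp add: algebra_simps Ko_g ro_ax ro_ax_z ro_ba ro_ba_z ro_bx ro_bx_z ro_aa ro_aa_z ro_bb ro_bb_z ro_Ea ro_Ea_z ro_Na ro_Na_z ro_Fa ro_Fa_z ro_Ex ro_Ex_z ro_Nx ro_Nx_z ro_Fx ro_Fx_z)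
  from 1 2 show ?thesis by (rule HOL.trans)
qed
lemma ro_Eb_z: "go Xi1 * (go Th2 * z) = (go Th2 * (go Xi1 * z)) + (Ko * (go Th2 * (go Xi2 * z))) + (Ko * (go Th2 * (go Xi2 * z)))"
proof -
  have "go Xi1 * (go Th2 * z) = (go Xi1 * (go Th2)) * z" by (simp add: mult.assoc)
  also have "\<dots> = ((go Th2 * (go Xi1)) + (Ko * (go Th2 * (go Xi2))) + (Ko * (go Th2 * (go Xi2)))) * z" by (simp only: ro_Eb)
  also have "\<dots> = (go Th2 * (go Xi1 * z)) + (Ko * (go Th2 * (go Xi2 * z))) + (Ko * (go Th2 * (go Xi2 * z)))" by (simp add: algebra_simps)
  finally show ?thesis .
qed
lemma rawo_B8: "abs_qo (\<lambda>h. Pl (Tm t2 et) (Tm et t2)) = abs_qo (\<lambda>h. C 0)"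
  by (rule qo.abs_eq_iff[THEN iffD2]) (simp add: eqO_def relB_def cong.rel)
lemma ro_Nb: "go Eta * (go Th2) = - (go Th2 * (go Eta))"
proof -
  note raw = rawo_B8[unfolded pusho convo rhoo]
  have 1: "go Eta * (go Th2) = - (go Th2 * go Eta)" by (rule minus_unique[OF raw, symmetric])
  have 2: "- (go Th2 * go Eta) = - (go Th2 * (go Eta))" by (simp add: algebra_simps Ko_g ro_ax ro_ax_z ro_ba ro_ba_z ro_bx ro_bx_z ro_aa ro_aa_z ro_bb ro_bb_z ro_Ea ro_Ea_z ro_Na ro_Na_z ro_Fa ro_Fa_z ro_Ex ro_Ex_z ro_Nx ro_Nx_z ro_Fx ro_Fx_z ro_Eb ro_Eb_z)
  from 1 2 show ?thesis by (rule HOL.trans)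
qed
lemma ro_Nb_z: "go Eta * (go Th2 * z) = - (go Th2 * (go Eta * z))"
proof -
  have "go Eta * (go Th2 * z) = (go Eta * (go Th2)) * z" by (simp add: mult.assoc)
  also have "\<dots> = (- (go Th2 * (go Eta))) * z" by (simp only: ro_Nb)
  also have "\<dots> = - (go Th2 * (go Eta * z))" by (simp add: algebra_simps)
  finally show ?thesis .
qed
lemma rawo_B9: "abs_qo (\<lambda>h. mn (Tm t2 e2) (Tm e2 t2)) = abs_qo (\<lambda>h. C 0)"
  by (rule qo.abs_eq_iff[THEN iffD2]) (simp add: eqO_def relB_def cong.rel)
lemma ro_Fb: "go Xi2 * (go Th2) = (go Th2 * (go Xi2))"
proof -
  note raw = rawo_B9[unfolded pusho convo rhoo]
  have 1: "go Xi2 * (go Th2) = (go Th2 * go Xi2) - 0" by (subst raw[symmetric]) simp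
  have 2: "(go Th2 * go Xi2) - 0 = (go Th2 * (go Xi2))" by (simp add: algebra_simps Ko_g ro_ax ro_ax_z ro_ba ro_ba_z ro_bx ro_bx_z ro_aa ro_aa_z ro_bb ro_bb_z ro_Ea ro_Ea_z ro_Na ro_Na_z ro_Fa ro_Fa_z ro_Ex ro_Ex_z ro_Nx ro_Nx_z ro_Fx ro_Fx_z ro_Eb ro_Eb_z ro_Nb ro_Nb_z)
  from 1 2 show ?thesis by (rule HOL.trans)
qed
lemma ro_Fb_z: "go Xi2 * (go Th2 * z) = (go Th2 * (go Xi2 * z))"
proof -
  have "go Xi2 * (go Th2 * z) = (go Xi2 * (go Th2)) * z" by (simp add: mult.assoc)
  also have "\<dots> = ((go Th2 * (go Xi2))) * z" by (simp only: ro_Fb)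
  also have "\<dots> = (go Th2 * (go Xi2 * z))" by (simp add: algebra_simps)
  finally show ?thesis .
qed
lemma rawo_W3: "abs_qo (\<lambda>h. Tm et e2) = abs_qo (\<lambda>h. Tm e2 et)"
  by (rule qo.abs_eq_iff[THEN iffD2]) (simp add: eqO_def relW_def cong.rel)
lemma ro_NF: "go Eta * (go Xi2) = (go Xi2 * (go Eta))"
proof -
  note raw = rawo_W3[unfolded pusho convo rhoo]
  have 1: "go Eta * (go Xi2) = (go Xi2 * go Eta)" by (rule raw)
  have 2: "(go Xi2 * go Eta) = (go Xi2 * (go Eta))" by (simp add: algebra_simps Ko_g ro_ax ro_ax_z ro_ba ro_ba_z ro_bx ro_bx_z ro_aa ro_aa_z ro_bb ro_bb_z ro_Ea ro_Ea_z ro_Na ro_Na_z ro_Fa ro_Fa_z ro_Ex ro_Ex_z ro_Nx ro_Nx_z ro_Fx ro_Fx_z ro_Eb ro_Eb_z ro_Nb ro_Nb_z ro_Fb ro_Fb_z)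
  from 1 2 show ?thesis by (rule HOL.trans)
qed
lemma ro_NF_z: "go Eta * (go Xi2 * z) = (go Xi2 * (go Eta * z))"
proof -
  have "go Eta * (go Xi2 * z) = (go Eta * (go Xi2)) * z" by (simp add: mult.assoc)
  also have "\<dots> = ((go Xi2 * (go Eta))) * z" by (simp only: ro_NF)
  also have "\<dots> = (go Xi2 * (go Eta * z))" by (simp add: algebra_simps)
  finally show ?thesis .
qed
lemma rawo_W4: "abs_qo (\<lambda>h. Tm et et) = abs_qo (\<lambda>h. sm (-h/2) (Tm e2 e2))"
  by (rule qo.abs_eq_iff[THEN iffD2]) (simp add: eqO_def relW_def cong.rel)
lemma ro_NN: "go Eta * (go Eta) = - (Ko * (go Xi2 * (go Xi2)))"
proof -
  note raw = rawo_W4[unfolded pusho convo rhoo]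
  have 1: "go Eta * (go Eta) = ((- Ko) * (go Xi2 * go Xi2))" by (rule raw)
  have 2: "((- Ko) * (go Xi2 * go Xi2)) = - (Ko * (go Xi2 * (go Xi2)))" by (simp add: algebra_simps Ko_g ro_ax ro_ax_z ro_ba ro_ba_z ro_bx ro_bx_z ro_aa ro_aa_z ro_bb ro_bb_z ro_Ea ro_Ea_z ro_Na ro_Na_z ro_Fa ro_Fa_z ro_Ex ro_Ex_z ro_Nx ro_Nx_z ro_Fx ro_Fx_z ro_Eb ro_Eb_z ro_Nb ro_Nb_z ro_Fb ro_Fb_z ro_NF ro_NF_z)
  from 1 2 show ?thesis by (rule HOL.trans)
qed
lemma ro_NN_z: "go Eta * (go Eta * z) = - (Ko * (go Xi2 * (go Xi2 * z)))"
proof -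
  have "go Eta * (go Eta * z) = (go Eta * (go Eta)) * z" by (simp add: mult.assoc)
  also have "\<dots> = (- (Ko * (go Xi2 * (go Xi2)))) * z" by (simp only: ro_NN)
  also have "\<dots> = - (Ko * (go Xi2 * (go Xi2 * z)))" by (simp add: algebra_simps)
  finally show ?thesis .
qed
lemma rawo_W1: "abs_qo (\<lambda>h. mn (Tm e1 et) (Tm et e1)) = abs_qo (\<lambda>h. sm h (Tm et e2))"
  by (rule qo.abs_eq_iff[THEN iffD2]) (simp add: eqO_def relW_def cong.rel)
lemma ro_EN: "go Xi1 * (go Eta) = (Ko * (go Xi2 * (go Eta))) + (Ko * (go Xi2 * (go Eta))) + (go Eta * (go Xi1))"
proof -
  note raw = rawo_W1[unfolded pusho convo rhoo]
  have 1: "go Xi1 * (go Eta) = (((Ko + Ko)) * (go Eta * go Xi2)) + (go Eta * go Xi1)" by (rule raw[unfolded diff_eq_eq])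
  have 2: "(((Ko + Ko)) * (go Eta * go Xi2)) + (go Eta * go Xi1) = (Ko * (go Xi2 * (go Eta))) + (Ko * (go Xi2 * (go Eta))) + (go Eta * (go Xi1))" by (simp add: algebra_simps Ko_g ro_ax ro_ax_z ro_ba ro_ba_z ro_bx ro_bx_z ro_aa ro_aa_z ro_bb ro_bb_z ro_Ea ro_Ea_z ro_Na ro_Na_z ro_Fa ro_Fa_z ro_Ex ro_Ex_z ro_Nx ro_Nx_z ro_Fx ro_Fx_z ro_Eb ro_Eb_z ro_Nb ro_Nb_z ro_Fb ro_Fb_z ro_NF ro_NF_z ro_NN ro_NN_z)
  from 1 2 show ?thesis by (rule HOL.trans)
qed
lemma ro_EN_z: "go Xi1 * (go Eta * z) = (Ko * (go Xi2 * (go Eta * z))) + (Ko * (go Xi2 * (go Eta * z))) + (go Eta * (go Xi1 * z))"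
proof -
  have "go Xi1 * (go Eta * z) = (go Xi1 * (go Eta)) * z" by (simp add: mult.assoc)
  also have "\<dots> = ((Ko * (go Xi2 * (go Eta))) + (Ko * (go Xi2 * (go Eta))) + (go Eta * (go Xi1))) * z" by (simp only: ro_EN)
  also have "\<dots> = (Ko * (go Xi2 * (go Eta * z))) + (Ko * (go Xi2 * (go Eta * z))) + (go Eta * (go Xi1 * z))" by (simp add: algebra_simps)
  finally show ?thesis .
qed
lemma rawo_W2: "abs_qo (\<lambda>h. mn (Tm e1 e2) (Tm e2 e1)) = abs_qo (\<lambda>h. sm h (Tm e2 e2))"
  by (rule qo.abs_eq_iff[THEN iffD2]) (simp add: eqO_def relW_def cong.rel)
lemma ro_EF: "go Xi1 * (go Xi2) = (go Xi2 * (go Xi1)) + (Ko * (go Xi2 * (go Xi2))) + (Ko * (go Xi2 * (go Xi2)))"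
proof -
  note raw = rawo_W2[unfolded pusho convo rhoo]
  have 1: "go Xi1 * (go Xi2) = (((Ko + Ko)) * (go Xi2 * go Xi2)) + (go Xi2 * go Xi1)" by (rule raw[unfolded diff_eq_eq])
  have 2: "(((Ko + Ko)) * (go Xi2 * go Xi2)) + (go Xi2 * go Xi1) = (go Xi2 * (go Xi1)) + (Ko * (go Xi2 * (go Xi2))) + (Ko * (go Xi2 * (go Xi2)))" by (simp add: algebra_simps Ko_g ro_ax ro_ax_z ro_ba ro_ba_z ro_bx ro_bx_z ro_aa ro_aa_z ro_bb ro_bb_z ro_Ea ro_Ea_z ro_Na ro_Na_z ro_Fa ro_Fa_z ro_Ex ro_Ex_z ro_Nx ro_Nx_z ro_Fx ro_Fx_z ro_Eb ro_Eb_z ro_Nb ro_Nb_z ro_Fb ro_Fb_z ro_NF ro_NF_z ro_NN ro_NN_z ro_EN ro_EN_z)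
  from 1 2 show ?thesis by (rule HOL.trans)
qed
lemma ro_EF_z: "go Xi1 * (go Xi2 * z) = (go Xi2 * (go Xi1 * z)) + (Ko * (go Xi2 * (go Xi2 * z))) + (Ko * (go Xi2 * (go Xi2 * z)))"
proof -
  have "go Xi1 * (go Xi2 * z) = (go Xi1 * (go Xi2)) * z" by (simp add: mult.assoc)
  also have "\<dots> = ((go Xi2 * (go Xi1)) + (Ko * (go Xi2 * (go Xi2))) + (Ko * (go Xi2 * (go Xi2)))) * z" by (simp only: ro_EF)
  also have "\<dots> = (go Xi2 * (go Xi1 * z)) + (Ko * (go Xi2 * (go Xi2 * z))) + (Ko * (go Xi2 * (go Xi2 * z)))" by (simp add: algebra_simps)
  finally show ?thesis .
qed
lemmas NFo = ro_ax ro_ax_z ro_ba ro_ba_z ro_bx ro_bx_z ro_aa ro_aa_z ro_bb ro_bb_z ro_Ea ro_Ea_z ro_Na ro_Na_z ro_Fa ro_Fa_z ro_Ex ro_Ex_z ro_Nx ro_Nx_z ro_Fx ro_Fx_z ro_Eb ro_Eb_z ro_Nb ro_Nb_z ro_Fb ro_Fb_z ro_NF ro_NF_z ro_NN ro_NN_z ro_EN ro_EN_z ro_EF ro_EF_z Ko_g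


lemma evod_Pl: "evod (Pl a b) = (Pl (fst (evod a)) (fst (evod b)), Pl (snd (evod a)) (snd (evod b)))"
  by (simp add: Let_def split_beta)
lemma evod_Tm: "evod (Tm a b) = (Pl (Tm (fst (evod a)) (fst (evod b))) (Tm (snd (evod a)) (snd (evod b))),
     Pl (Tm (fst (evod a)) (snd (evod b))) (Tm (snd (evod a)) (fst (evod b))))"
  by (simp add: Let_def split_beta)
declare evod.simps(3,4)[simp del]
lemmas evod_simps[simp] = evod_Pl evod_Tm

lemma ispar_G': "p = gpar g \<Longrightarrow> ispar (G g) p" by (simp add: ispar.intros(1))
lemma fdeg_G': "k = gdeg g \<Longrightarrow> fdeg (G g) k" by (simp add: fdeg.intros(1))

lemma ispar_Tm': "ispar a p \<Longrightarrow> ispar b q \<Longrightarrow> r = (p \<noteq> q) \<Longrightarrow> ispar (Tm a b) r"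
  using ispar.intros(5) by blast

lemma E1: "selt h a = selt h (fst (evod a)) + selt h (snd (evod a))"
  by (induction a) (auto simp: selt_push algebra_simps)

lemma E2: "selt h (fst (evod (fst (evod a)))) = selt h (fst (evod a)) \<and> selt h (snd (evod (fst (evod a)))) = 0
  \<and> selt h (fst (evod (snd (evod a)))) = 0 \<and> selt h (snd (evod (snd (evod a)))) = selt h (snd (evod a))"
  by (induction a) (auto simp: selt_push algebra_simps)

lemma E3: "selt h (dd a) = selt h (dd (fst (evod a))) + selt h (dd (snd (evod a)))"
proof (induction a)
  case (G g) then show ?case by (cases g) (auto simp: selt_push)
next
  case (C r) then show ?case by (simp add: selt_push)
next
  case (Pl a b) then show ?case by (simp add: selt_push algebra_simps)
next
  case (Tm a b)
  have b: "selt h b = selt h (fst (evod b)) + selt h (snd (evod b))" by (rule E1)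
  show ?case using Tm.IH b E2[of h a] by (simp add: selt_push algebra_simps)
qed

lemma E4: "ispar (fst (evod a)) False \<and> ispar (snd (evod a)) True"
proof (induction a)
  case (G g) then show ?case by (cases g) (auto intro: ispar.intros ispar_G')
next
  case (C r) then show ?case by (auto intro: ispar.intros)
next
  case (Pl a b) then show ?case by (auto intro: ispar.intros)
next
  case (Tm a b) then show ?case by (auto intro!: ispar.intros(4) ispar_Tm')
qed

lemma fdeg_Tm: "fdeg a i \<Longrightarrow> fdeg b j \<Longrightarrow> k = i + j \<Longrightarrow> fdeg (Tm a b) k"
  using fdeg.intros(5) by blast

lemma E5: "fdeg a k \<Longrightarrow> fdeg (fst (evod a)) k \<and> fdeg (snd (evod a)) k"
proof (induction rule: fdeg.induct)
  case (1 g) then show ?case by (cases g) (auto intro: fdeg.intros fdeg_G')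
next
  case (2 r) then show ?case by (auto intro: fdeg.intros)
next
  case (3 k) then show ?case by (auto intro: fdeg.intros)
next
  case (4 a k b) then show ?case by (auto intro: fdeg.intros)
next
  case (5 a i b j) then show ?case by (auto intro: fdeg.intros fdeg_Tm)
qed

lemma E6: "fdeg a k \<Longrightarrow> fdeg (dd a) (Suc k)"
proof (induction rule: fdeg.induct)
  case (1 g) then show ?case by (cases g) (auto intro: fdeg.intros fdeg_G')
next
  case (2 r) then show ?case by (auto intro: fdeg.intros)
next
  case (3 k) then show ?case by (auto intro: fdeg.intros)
next
  case (4 a k b) then show ?case by (auto intro: fdeg.intros)
next
  case (5 a i b j)
  have e: "fdeg (fst (evod a)) i" "fdeg (snd (evod a)) i" using E5[OF 5(1)] by auto
  have c: "fdeg (C (-1)) 0" by (rule fdeg.intros)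
  show ?case
    by (simp, intro fdeg.intros fdeg_Tm[OF 5(3) 5(2)] fdeg_Tm[OF e(1) 5(4)] fdeg_Tm[OF c fdeg_Tm[OF e(2) 5(4)]]) auto
qed


fun rop :: "real \<Rightarrow> gen \<Rightarrow> (nat \<Rightarrow> real) \<Rightarrow> (nat \<Rightarrow> real)" where
  "rop h Th1 v = (\<lambda>i. if i = 3 then v 0 else if i = 5 then v 1 else if i = 6 then v 2 else if i = 7 then v 4 else 0)"
| "rop h Xx v = (\<lambda>i. 0)"
| "rop h Th2 v = (\<lambda>i. 0)"
| "rop h Xi1 v = (\<lambda>i. if i = 4 then h * v 1 else if i = 5 then - h * v 3 else 0)"
| "rop h Eta v = (\<lambda>i. if i = 2 then v 0 else if i = 4 then - h / 2 * v 2 else if i = 6 then - v 3 else if i = 7 then h / 2 * v 6 else 0)"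
| "rop h Xi2 v = (\<lambda>i. if i = 1 then v 0 else if i = 4 then v 1 else if i = 5 then v 3 else if i = 7 then v 5 else 0)"

fun interp :: "real \<Rightarrow> fexp \<Rightarrow> (nat \<Rightarrow> real) \<Rightarrow> (nat \<Rightarrow> real)" where
  "interp h (G g) v = rop h g v"
| "interp h (C r) v = (\<lambda>i. r * v i)"
| "interp h (Pl a b) v = (\<lambda>i. interp h a v i + interp h b v i)"
| "interp h (Tm a b) v = interp h a (interp h b v)"

lemma rop_lin: "rop h g (\<lambda>i. u i + w i) = (\<lambda>i. rop h g u i + rop h g w i)"
  "rop h g (\<lambda>i. r * u i) = (\<lambda>i. r * rop h g u i)"
  by (cases g; auto simp: algebra_simps)+

lemma interp_lin: "interp h a (\<lambda>i. u i + w i) = (\<lambda>i. interp h a u i + interp h a w i)"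
  "interp h a (\<lambda>i. r * u i) = (\<lambda>i. r * interp h a u i)"
  by (induction a arbitrary: u w) (auto simp: rop_lin algebra_simps)

lemma rels_ok: "(l, r) \<in> relA h \<union> relB h \<union> relW h \<Longrightarrow> interp h l = interp h r"
  unfolding relA_def relB_def relW_def
  by (auto simp: rho_def mn_def sm_def fun_eq_iff algebra_simps)

lemma interp_sound: "eqO h a b \<Longrightarrow> interp h a = interp h b"
  unfolding eqO_def
proof (induction rule: cong.induct)
  case (rel a b) then show ?case by (rule rels_ok)
next
  case (distl a b c) then show ?case by (auto simp: fun_eq_iff interp_lin)
next
  case (tm_cong a a' b b')
  show ?case by (rule ext, simp add: tm_cong.IH)
next
  case (c_central r a) then show ?case by (auto simp: fun_eq_iff interp_lin)
qed (auto simp: fun_eq_iff algebra_simps)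

lemma interp_target: "interp h (Tm (rho h) (G Xi2)) (\<lambda>i. if i = 0 then 1 else 0) 7 = 1"
  by (simp add: rho_def mn_def sm_def)

lemma rep_nonzero: "eqO h (sm k (Tm (rho h) (G Xi2))) (C 0) \<Longrightarrow> k = 0"
proof -
  assume "eqO h (sm k (Tm (rho h) (G Xi2))) (C 0)"
  hence "interp h (sm k (Tm (rho h) (G Xi2))) = interp h (C 0)" by (rule interp_sound)
  hence "interp h (sm k (Tm (rho h) (G Xi2))) (\<lambda>i. if i = 0 then 1 else 0) 7 = interp h (C 0) (\<lambda>i. if i = 0 then 1 else 0) 7" by simp
  thus "k = 0" using interp_target[of h] by (simp add: sm_def del: interp.simps(4)) (simp add: sm_def)
qed


lemma O1: "abs_qo (\<lambda>h. Tm (rho h) (rho h)) = abs_qo (\<lambda>h. C 0)"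
  by (simp add: pusho convo rhoo NFo algebra_simps)
lemma O2a: "abs_qo (\<lambda>h. Tm e1 (rho h)) = abs_qo (\<lambda>h. Tm (rho h) e1)"
  by (simp add: pusho rhoo NFo algebra_simps)
lemma O2b: "abs_qo (\<lambda>h. Tm et (rho h)) = abs_qo (\<lambda>h. Tm (C (-1)) (Tm (rho h) et))"
  by (simp add: pusho convo rhoo NFo algebra_simps)
lemma O2c: "abs_qo (\<lambda>h. Tm e2 (rho h)) = abs_qo (\<lambda>h. Tm (rho h) e2)"
  by (simp add: pusho rhoo NFo algebra_simps)
lemma O3: "isXi a \<Longrightarrow> isXi b \<Longrightarrow> abs_qo (\<lambda>h. sigtab h a b) = abs_qo (\<lambda>h. Tm (G a) (G b))"
  unfolding isXi_def by (auto simp: pusho convo NFo algebra_simps)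

lemma S_O1: "selo h (rho h) * selo h (rho h) = 0"
  using selo_abs[OF O1, of h] by (simp add: selo_push)
lemma S_O2: "selo h e1 * selo h (rho h) = selo h (rho h) * selo h e1"
  "selo h et * selo h (rho h) = - (selo h (rho h) * selo h et)"
  "selo h e2 * selo h (rho h) = selo h (rho h) * selo h e2"
  using selo_abs[OF O2a, of h] selo_abs[OF O2b, of h] selo_abs[OF O2c, of h] by (simp_all add: selo_push)
lemma S_O3: "isXi a \<Longrightarrow> isXi b \<Longrightarrow> selo h (sigtab h a b) = selo h (G a) * selo h (G b)"
  using selo_abs[OF O3, of a b h] by (simp add: selo_push)

definition lc3 :: "fexp \<Rightarrow> fexp \<Rightarrow> fexp \<Rightarrow> fexp" where
  "lc3 g1 g2 g3 = Pl (Tm g1 e1) (Pl (Tm g2 et) (Tm g3 e2))"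

fun cw :: "gen \<Rightarrow> gen \<Rightarrow> real \<Rightarrow> fexp \<times> fexp \<times> fexp" where
  "cw Xi1 Th1 h = (Pl t1 (sm h t2), sm (-h) xx, Pl (sm (-h) t1) (sm (h/2) (sm h t2)))"
| "cw Xi1 Xx h = (xx, sm h t2, C 0)"
| "cw Xi1 Th2 h = (t2, C 0, sm h t2)"
| "cw Eta Th1 h = (C 0, sm (-1) t1, sm h xx)"
| "cw Eta Xx h = (C 0, xx, sm h t2)"
| "cw Eta Th2 h = (C 0, sm (-1) t2, C 0)"
| "cw Xi2 Th1 h = (C 0, C 0, Pl t1 (sm (-h) t2))"
| "cw Xi2 Xx h = (C 0, C 0, xx)"
| "cw Xi2 Th2 h = (C 0, C 0, t2)"
| "cw a b h = (C 0, C 0, C 0)"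

lemma cw_tab: "isXi a \<Longrightarrow> gdeg g = 0 \<Longrightarrow>
  abs_qt (\<lambda>h. Tm (G a) (G g)) = abs_qt (\<lambda>h. lc3 (fst (cw a g h)) (fst (snd (cw a g h))) (snd (snd (cw a g h))))"
  unfolding isXi_def lc3_def by (cases g; auto simp: pusht convt NFt algebra_simps)

lemma fdeg_sm: "fdeg a k \<Longrightarrow> fdeg (sm r a) k"
  unfolding sm_def using fdeg_Tm fdeg.intros(2) by fastforce

lemma cw_deg: "gdeg g = 0 \<Longrightarrow> fdeg (fst (cw a g h)) 0 \<and> fdeg (fst (snd (cw a g h))) 0 \<and> fdeg (snd (snd (cw a g h))) 0"
  by (cases a; cases g; auto intro!: fdeg.intros fdeg_sm fdeg_G')

lemma selt_C: "selt h (C r) = qCt (\<lambda>h'. if h' = h then r else 0)"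
  unfolding selt_def qCt.abs_eq by (rule arg_cong[where f=abs_qt]) auto

lemma COMM: "fdeg f k \<Longrightarrow> k = 0 \<Longrightarrow> \<forall>a. isXi a \<longrightarrow> (\<exists>g1 g2 g3. fdeg g1 0 \<and> fdeg g2 0 \<and> fdeg g3 0 \<and>
    selt h (Tm (G a) f) = selt h (lc3 g1 g2 g3))"
proof (induction rule: fdeg.induct)
  case (1 g)
  show ?case
  proof (intro allI impI)
    fix a assume a: "isXi a"
    show "\<exists>g1 g2 g3. fdeg g1 0 \<and> fdeg g2 0 \<and> fdeg g3 0 \<and> selt h (Tm (G a) (G g)) = selt h (lc3 g1 g2 g3)"
      using cw_deg[where g=g and a=a and h=h] selt_abs[OF cw_tab[OF a, where g=g], where h=h] 1 by auto
  qed
next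
  case (2 r)
  show ?case
  proof (intro allI impI)
    fix a assume a: "isXi a"
    let ?c = "\<lambda>b. if a = b then C r else C 0"
    have "selt h (Tm (G a) (C r)) = selt h (lc3 (?c Xi1) (?c Eta) (?c Xi2))"
      using a unfolding isXi_def lc3_def by (auto simp: selt_push selt_C qCt_comm qCt_zero)
    moreover have "fdeg (?c b) 0" for b by (auto intro: fdeg.intros)
    ultimately show "\<exists>g1 g2 g3. fdeg g1 0 \<and> fdeg g2 0 \<and> fdeg g3 0 \<and> selt h (Tm (G a) (C r)) = selt h (lc3 g1 g2 g3)"
      by blast
  qed
next
  case (3 k)
  show ?case
  proof (intro allI impI)
    fix a assume a: "isXi a"
    have "selt h (Tm (G a) (C 0)) = selt h (lc3 (C 0) (C 0) (C 0))"
      unfolding lc3_def by (simp add: selt_push)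
    then show "\<exists>g1 g2 g3. fdeg g1 0 \<and> fdeg g2 0 \<and> fdeg g3 0 \<and> selt h (Tm (G a) (C 0)) = selt h (lc3 g1 g2 g3)"
      by (blast intro: fdeg.intros)
  qed
next
  case (4 f1 k f2)
  show ?case
  proof (intro allI impI)
    fix a assume a: "isXi a"
    obtain g1 g2 g3 where g: "fdeg g1 0" "fdeg g2 0" "fdeg g3 0" "selt h (Tm (G a) f1) = selt h (lc3 g1 g2 g3)"
      using 4 a by blast
    obtain u1 u2 u3 where u: "fdeg u1 0" "fdeg u2 0" "fdeg u3 0" "selt h (Tm (G a) f2) = selt h (lc3 u1 u2 u3)"
      using 4 a by blast
    have "selt h (Tm (G a) (Pl f1 f2)) = selt h (lc3 (Pl g1 u1) (Pl g2 u2) (Pl g3 u3))"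
      using g(4) u(4) unfolding lc3_def by (simp add: selt_push algebra_simps)
    then show "\<exists>g1 g2 g3. fdeg g1 0 \<and> fdeg g2 0 \<and> fdeg g3 0 \<and> selt h (Tm (G a) (Pl f1 f2)) = selt h (lc3 g1 g2 g3)"
      using g u by (blast intro: fdeg.intros)
  qed
next
  case (5 f1 i f2 j)
  hence i: "i = 0" and j: "j = 0" by auto
  show ?case
  proof (intro allI impI)
    fix a assume a: "isXi a"
    obtain g1 g2 g3 where g: "fdeg g1 0" "fdeg g2 0" "fdeg g3 0" "selt h (Tm (G a) f1) = selt h (lc3 g1 g2 g3)"
      using 5 i a by blast
    obtain p1 p2 p3 where p: "fdeg p1 0" "fdeg p2 0" "fdeg p3 0" "selt h (Tm e1 f2) = selt h (lc3 p1 p2 p3)"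
      using 5 j by (auto simp: isXi_def)
    obtain q1 q2 q3 where q: "fdeg q1 0" "fdeg q2 0" "fdeg q3 0" "selt h (Tm et f2) = selt h (lc3 q1 q2 q3)"
      using 5 j by (auto simp: isXi_def)
    obtain r1 r2 r3 where r: "fdeg r1 0" "fdeg r2 0" "fdeg r3 0" "selt h (Tm e2 f2) = selt h (lc3 r1 r2 r3)"
      using 5 j by (auto simp: isXi_def)
    let ?w = "\<lambda>x y z. Pl (Tm g1 x) (Pl (Tm g2 y) (Tm g3 z))"
    have eqs: "selt h e1 * selt h f2 = selt h (lc3 p1 p2 p3)" "selt h et * selt h f2 = selt h (lc3 q1 q2 q3)"
      "selt h e2 * selt h f2 = selt h (lc3 r1 r2 r3)" "selt h (G a) * selt h f1 = selt h (lc3 g1 g2 g3)"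
      using p(4) q(4) r(4) g(4) by (simp_all add: selt_push)
    have "selt h (Tm (G a) (Tm f1 f2)) = (selt h (G a) * selt h f1) * selt h f2"
      by (simp add: selt_push mult.assoc)
    also have "\<dots> = selt h g1 * (selt h e1 * selt h f2) + selt h g2 * (selt h et * selt h f2) + selt h g3 * (selt h e2 * selt h f2)"
      unfolding eqs(4) unfolding lc3_def selt_push by (simp add: algebra_simps)
    also have "\<dots> = selt h (lc3 (?w p1 q1 r1) (?w p2 q2 r2) (?w p3 q3 r3))"
      unfolding eqs(1-3) unfolding lc3_def selt_push by (simp add: algebra_simps)
    finally have calc: "selt h (Tm (G a) (Tm f1 f2)) = selt h (lc3 (?w p1 q1 r1) (?w p2 q2 r2) (?w p3 q3 r3))" .
    have wdeg: "fdeg (?w x y z) 0" if "fdeg x 0" "fdeg y 0" "fdeg z 0" for x y z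
      by (intro fdeg.intros(4) fdeg_Tm[OF g(1) that(1)] fdeg_Tm[OF g(2) that(2)] fdeg_Tm[OF g(3) that(3)]) simp_all
    show "\<exists>g1 g2 g3. fdeg g1 0 \<and> fdeg g2 0 \<and> fdeg g3 0 \<and> selt h (Tm (G a) (Tm f1 f2)) = selt h (lc3 g1 g2 g3)"
      by (rule exI[of _ "?w p1 q1 r1"], rule exI[of _ "?w p2 q2 r2"], rule exI[of _ "?w p3 q3 r3"])
        (intro conjI calc wdeg p(1-3) q(1-3) r(1-3))
  qed
qed


lemma T2O: "eqT h a b \<Longrightarrow> selo h a = selo h b" by (simp add: selo_eq eqT_eqO)
lemma St2o: "selt h a = selt h b \<Longrightarrow> selo h a = selo h b" using selt_eq T2O by blast

lemma fdeg_C0: "fdeg (C 0) k" by (rule fdeg.intros(3))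
lemma fdeg_Xi: "isXi a \<Longrightarrow> fdeg (G a) 1" unfolding isXi_def by (auto intro: fdeg_G')
lemma gdeg1: "gdeg g = 1 \<Longrightarrow> isXi g" unfolding isXi_def by (cases g) auto

lemma qCo_neg: "- qCo f = qCo (\<lambda>h. - f h)"
proof -
  have "- qCo f = qCo (\<lambda>_. -1) * qCo f" by (simp add: qCo_mone)
  also have "\<dots> = qCo (\<lambda>h. - f h)" by (simp add: qCo_mult)
  finally show ?thesis .
qed

lemma fdeg_sm': "fdeg a k \<Longrightarrow> fdeg (sm r a) k" by (rule fdeg_sm)

context
  fixes h :: real and sig D :: "fexp \<Rightarrow> fexp"
  assumes SIG: "is_sigma h sig" and CONN: "is_connection h sig D"
begin

lemma sig_wd: "fdeg a 2 \<Longrightarrow> fdeg b 2 \<Longrightarrow> selt h a = selt h b \<Longrightarrow> selo h (sig a) = selo h (sig b)"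
  using SIG unfolding is_sigma_def by (metis T2O selt_eq)
lemma sig_add: "fdeg a 2 \<Longrightarrow> fdeg b 2 \<Longrightarrow> selo h (sig (Pl a b)) = selo h (sig a) + selo h (sig b)"
  using SIG unfolding is_sigma_def by (metis T2O selo_Pl)
lemma sig_l: "fdeg f 0 \<Longrightarrow> fdeg a 2 \<Longrightarrow> selo h (sig (Tm f a)) = selo h f * selo h (sig a)"
  using SIG unfolding is_sigma_def by (metis T2O selo_Tm)
lemma sig_r: "fdeg f 0 \<Longrightarrow> fdeg a 2 \<Longrightarrow> selo h (sig (Tm a f)) = selo h (sig a) * selo h f"
  using SIG unfolding is_sigma_def by (metis T2O selo_Tm)
lemma sig_tab: "isXi a \<Longrightarrow> isXi b \<Longrightarrow> selo h (sig (Tm (G a) (G b))) = selo h (G a) * selo h (G b)"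
  using SIG S_O3[of a b h] unfolding is_sigma_def by (metis T2O)

lemma SZ: "fdeg t 2 \<Longrightarrow> selt h t = 0 \<Longrightarrow> selo h (sig t) = selo h t"
proof -
  assume t: "fdeg t 2" and z: "selt h t = 0"
  have e11: "fdeg (Tm e1 e1) 2" by (rule fdeg_Tm[OF fdeg_G' fdeg_G']) auto
  have zd: "fdeg (Tm (C 0) (Tm e1 e1)) 2" by (rule fdeg_Tm[OF fdeg_C0 e11]) simp
  have "selo h (sig t) = selo h (sig (Tm (C 0) (Tm e1 e1)))"
    by (rule sig_wd[OF t zd]) (simp add: z selt_push)
  also have "\<dots> = 0" by (simp add: sig_l[OF fdeg_C0 e11] selo_C0)
  also have "0 = selo h t" using St2o[where a=t and b="C 0"] z by (simp add: selt_C0 selo_C0)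
  finally show ?thesis .
qed

lemma Qz: "fdeg z k \<Longrightarrow> k = 1 \<Longrightarrow> \<forall>a. isXi a \<longrightarrow> selo h (sig (Tm (G a) z)) = selo h (Tm (G a) z)"
proof (induction rule: fdeg.induct)
  case (1 g)
  then show ?case using sig_tab gdeg1 by (simp add: selo_Tm)
next
  case (2 r) then show ?case by simp
next
  case (3 k)
  show ?case
  proof (intro allI impI)
    fix a assume a: "isXi a"
    show "selo h (sig (Tm (G a) (C 0))) = selo h (Tm (G a) (C 0))"
      by (rule SZ) (auto intro: fdeg_Tm[OF fdeg_Xi[OF a] fdeg_C0] simp: selt_push)
  qed
next
  case (4 z1 k z2)
  show ?case
  proof (intro allI impI)
    fix a assume a: "isXi a"
    have d1: "fdeg (Tm (G a) z1) 2" "fdeg (Tm (G a) z2) 2" "fdeg (Tm (G a) (Pl z1 z2)) 2"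
      using 4 by (auto intro!: fdeg_Tm[OF fdeg_Xi[OF a]] fdeg.intros(4))
    have "selo h (sig (Tm (G a) (Pl z1 z2))) = selo h (sig (Pl (Tm (G a) z1) (Tm (G a) z2)))"
      by (rule sig_wd) (use d1 in \<open>auto intro: fdeg.intros(4) simp: selt_push algebra_simps\<close>)
    also have "\<dots> = selo h (sig (Tm (G a) z1)) + selo h (sig (Tm (G a) z2))" using d1 by (simp add: sig_add)
    also have "\<dots> = selo h (Tm (G a) (Pl z1 z2))" using 4 a by (simp add: selo_push algebra_simps)
    finally show "selo h (sig (Tm (G a) (Pl z1 z2))) = selo h (Tm (G a) (Pl z1 z2))" .
  qed
next
  case (5 f i z j)
  show ?case
  proof (intro allI impI)
    fix a assume a: "isXi a"
    consider "i = 0" "j = 1" | "i = 1" "j = 0" using 5 by linarith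
    then show "selo h (sig (Tm (G a) (Tm f z))) = selo h (Tm (G a) (Tm f z))"
    proof cases
      case 1
      obtain g1 g2 g3 where g: "fdeg g1 0" "fdeg g2 0" "fdeg g3 0" "selt h (Tm (G a) f) = selt h (lc3 g1 g2 g3)"
        using COMM[where f=f and k=i and h=h] 5 1 a by blast
      have zd: "fdeg z 1" using 5 1 by simp
      have fd: "fdeg f 0" using 5 1 by simp
      have ed: "fdeg (Tm (G b) z) 2" if "isXi b" for b by (rule fdeg_Tm[OF fdeg_Xi[OF that] zd]) simp
      have X: "isXi Xi1" "isXi Eta" "isXi Xi2" by (simp_all add: isXi_def)
      have gd: "fdeg (Tm g (Tm (G b) z)) 2" if "fdeg g 0" "isXi b" for g b by (rule fdeg_Tm[OF that(1) ed[OF that(2)]]) simp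
      let ?Y = "Pl (Tm g1 (Tm e1 z)) (Pl (Tm g2 (Tm et z)) (Tm g3 (Tm e2 z)))"
      have Yd: "fdeg ?Y 2" using gd g X by (auto intro!: fdeg.intros(4))
      have ad: "fdeg (Tm (G a) (Tm f z)) 2" by (rule fdeg_Tm[OF fdeg_Xi[OF a] fdeg_Tm[OF fd zd]]) simp_all
      have eq1: "selt h (Tm (G a) (Tm f z)) = selt h ?Y"
      proof -
        have "selt h (Tm (G a) (Tm f z)) = selt h (Tm (G a) f) * selt h z" by (simp add: selt_push mult.assoc)
        also have "\<dots> = selt h ?Y" unfolding g(4) lc3_def by (simp add: selt_push algebra_simps)
        finally show ?thesis .
      qed
      have IH: "selo h (sig (Tm (G b) z)) = selo h (Tm (G b) z)" if "isXi b" for b using 5 1 that by simp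
      have "selo h (sig (Tm (G a) (Tm f z))) = selo h (sig ?Y)" by (rule sig_wd[OF ad Yd eq1])
      also have "\<dots> = selo h ?Y"
        using gd g X IH ed by (simp add: sig_add sig_l fdeg.intros(4) selo_push)
      also have "\<dots> = selo h (Tm (G a) (Tm f z))" using St2o[OF eq1] by simp
      finally show ?thesis .
    next
      case 2
      have zd: "fdeg f 1" using 5 2 by simp
      have fd: "fdeg z 0" using 5 2 by simp
      have d1: "fdeg (Tm (G a) f) 2" by (rule fdeg_Tm[OF fdeg_Xi[OF a] zd]) simp
      have ad: "fdeg (Tm (G a) (Tm f z)) 2" by (rule fdeg_Tm[OF fdeg_Xi[OF a] fdeg_Tm[OF zd fd]]) simp_all
      have ad2: "fdeg (Tm (Tm (G a) f) z) 2" by (rule fdeg_Tm[OF d1 fd]) simp_all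
      have "selo h (sig (Tm (G a) (Tm f z))) = selo h (sig (Tm (Tm (G a) f) z))"
        by (rule sig_wd[OF ad ad2]) (simp add: selt_push mult.assoc)
      also have "\<dots> = selo h (sig (Tm (G a) f)) * selo h z" by (rule sig_r[OF fd d1])
      also have "\<dots> = selo h (Tm (G a) (Tm f z))" using 5 2 a by (simp add: selo_push mult.assoc)
      finally show ?thesis .
    qed
  qed
qed

lemma Rx: "fdeg x k \<Longrightarrow> k = 1 \<Longrightarrow> \<forall>z. fdeg z 1 \<longrightarrow> selo h (sig (Tm x z)) = selo h (Tm x z)"
proof (induction rule: fdeg.induct)
  case (1 g)
  show ?case
  proof (intro allI impI)
    fix z assume z: "fdeg z 1"
    have g: "isXi g" using 1 gdeg1 by simp
    show "selo h (sig (Tm (G g) z)) = selo h (Tm (G g) z)" using Qz[OF z HOL.refl] g by simp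
  qed
next
  case (2 r) then show ?case by simp
next
  case (3 k)
  show ?case
  proof (intro allI impI)
    fix z assume z: "fdeg z 1"
    show "selo h (sig (Tm (C 0) z)) = selo h (Tm (C 0) z)"
      by (rule SZ) (auto intro: fdeg_Tm[OF fdeg_C0 z] simp: selt_push)
  qed
next
  case (4 x1 k x2)
  show ?case
  proof (intro allI impI)
    fix z assume z: "fdeg z 1"
    have x12: "fdeg x1 1" "fdeg x2 1" using 4 by simp_all
    have d1: "fdeg (Tm x1 z) 2" "fdeg (Tm x2 z) 2" "fdeg (Tm (Pl x1 x2) z) 2"
      by (rule fdeg_Tm[OF x12(1) z], simp, rule fdeg_Tm[OF x12(2) z], simp,
          rule fdeg_Tm[OF fdeg.intros(4)[OF x12] z], simp)
    have "selo h (sig (Tm (Pl x1 x2) z)) = selo h (sig (Pl (Tm x1 z) (Tm x2 z)))"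
      by (rule sig_wd) (use d1 in \<open>auto intro: fdeg.intros(4) simp: selt_push algebra_simps\<close>)
    also have "\<dots> = selo h (sig (Tm x1 z)) + selo h (sig (Tm x2 z))" using d1 by (simp add: sig_add)
    also have "\<dots> = selo h (Tm (Pl x1 x2) z)" using 4 z by (simp add: selo_push algebra_simps)
    finally show "selo h (sig (Tm (Pl x1 x2) z)) = selo h (Tm (Pl x1 x2) z)" .
  qed
next
  case (5 f i x j)
  show ?case
  proof (intro allI impI)
    fix z assume z: "fdeg z 1"
    consider "i = 0" "j = 1" | "i = 1" "j = 0" using 5 by linarith
    then show "selo h (sig (Tm (Tm f x) z)) = selo h (Tm (Tm f x) z)"
    proof cases
      case 1
      have fd: "fdeg f 0" and xd: "fdeg x 1" using 5 1 by simp_all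
      have d2: "fdeg (Tm x z) 2" by (rule fdeg_Tm[OF xd z]) simp
      have ad: "fdeg (Tm (Tm f x) z) 2" by (rule fdeg_Tm[OF fdeg_Tm[OF fd xd] z]) simp_all
      have ad2: "fdeg (Tm f (Tm x z)) 2" by (rule fdeg_Tm[OF fd d2]) simp_all
      have "selo h (sig (Tm (Tm f x) z)) = selo h (sig (Tm f (Tm x z)))"
        by (rule sig_wd[OF ad ad2]) (simp add: selt_push mult.assoc)
      also have "\<dots> = selo h f * selo h (sig (Tm x z))" by (rule sig_l[OF fd d2])
      also have "\<dots> = selo h (Tm (Tm f x) z)" using 5 1 z by (simp add: selo_push mult.assoc)
      finally show ?thesis .
    next
      case 2
      have xd: "fdeg f 1" and fd: "fdeg x 0" using 5 2 by simp_all
      have zz: "fdeg (Tm x z) 1" by (rule fdeg_Tm[OF fd z]) simp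
      have ad: "fdeg (Tm (Tm f x) z) 2" by (rule fdeg_Tm[OF fdeg_Tm[OF xd fd] z]) simp_all
      have ad2: "fdeg (Tm f (Tm x z)) 2" by (rule fdeg_Tm[OF xd zz]) simp_all
      have "selo h (sig (Tm (Tm f x) z)) = selo h (sig (Tm f (Tm x z)))"
        by (rule sig_wd[OF ad ad2]) (simp add: selt_push mult.assoc)
      also have "\<dots> = selo h (Tm f (Tm x z))" using 5 2 zz by simp
      also have "\<dots> = selo h (Tm (Tm f x) z)" by (simp add: selo_push mult.assoc)
      finally show ?thesis .
    qed
  qed
qed

lemma PS: "fdeg t k \<Longrightarrow> k = 2 \<Longrightarrow> selo h (sig t) = selo h t"
proof (induction rule: fdeg.induct)
  case (1 g) then show ?case by (cases g) auto
next
  case (2 r) then show ?case by simp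
next
  case (3 k)
  show ?case by (rule SZ) (auto intro: fdeg_C0 simp: selt_push)
next
  case (4 a k b)
  then show ?case by (simp add: sig_add selo_push)
next
  case (5 a i b j)
  consider "i = 0" "j = 2" | "i = 1" "j = 1" | "i = 2" "j = 0" using 5 by linarith
  then show ?case
  proof cases
    case 1 then show ?thesis using 5 by (simp add: sig_l selo_push)
  next
    case 2
    have "fdeg a 1" "fdeg b 1" using 5 2 by simp_all
    from Rx[OF this(1) HOL.refl] this(2) show ?thesis by simp
  next
    case 3 then show ?thesis using 5 by (simp add: sig_r selo_push)
  qed
qed

lemma CONN_parts:
  "\<forall>a b. fdeg a 1 \<longrightarrow> fdeg b 1 \<longrightarrow> eqT h a b \<longrightarrow> eqT h (D a) (D b)"
  "\<forall>a b. fdeg a 1 \<longrightarrow> fdeg b 1 \<longrightarrow> eqT h (D (Pl a b)) (Pl (D a) (D b))"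
  "\<forall>r a. fdeg a 1 \<longrightarrow> eqT h (D (sm r a)) (sm r (D a))"
  "\<forall>f p xi. fdeg f 0 \<longrightarrow> ispar f p \<longrightarrow> fdeg xi 1 \<longrightarrow>
       eqT h (D (Tm f xi)) (Pl (Tm (dd f) xi) (Tm (C (sgn p)) (Tm f (D xi))))"
  "\<forall>f xi q. fdeg f 0 \<longrightarrow> fdeg xi 1 \<longrightarrow> ispar xi q \<longrightarrow>
       eqT h (D (Tm xi f)) (Pl (Tm (C (sgn q)) (sig (Tm xi (dd f)))) (Tm (D xi) f))"
  using CONN unfolding is_connection_def by simp_all

lemma D_wd: assumes "fdeg a 1" "fdeg b 1" "selt h a = selt h b" shows "selo h (D a) = selo h (D b)"
proof -
  have "eqT h a b" using assms(3) selt_eq by blast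
  then have "eqT h (D a) (D b)" using CONN_parts(1) assms(1,2) by blast
  then show ?thesis by (rule T2O)
qed
lemma D_add: assumes "fdeg a 1" "fdeg b 1" shows "selo h (D (Pl a b)) = selo h (D a) + selo h (D b)"
proof -
  have "eqT h (D (Pl a b)) (Pl (D a) (D b))" using CONN_parts(2) assms by blast
  then show ?thesis by (simp add: T2O selo_Pl)
qed
lemma D_sm: assumes "fdeg a 1" shows "selo h (D (sm r a)) = selo h (sm r (D a))"
proof -
  have "eqT h (D (sm r a)) (sm r (D a))" using CONN_parts(3) assms by blast
  then show ?thesis by (rule T2O)
qed
lemma D_L: assumes "fdeg f 0" "ispar f p" "fdeg xi 1" shows
   "selo h (D (Tm f xi)) = selo h (Pl (Tm (dd f) xi) (Tm (C (sgn p)) (Tm f (D xi))))"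
proof -
  have "eqT h (D (Tm f xi)) (Pl (Tm (dd f) xi) (Tm (C (sgn p)) (Tm f (D xi))))"
    using CONN_parts(4) assms by blast
  then show ?thesis by (rule T2O)
qed
lemma D_R: assumes "fdeg f 0" "fdeg xi 1" "ispar xi q" shows
   "selo h (D (Tm xi f)) = selo h (Pl (Tm (C (sgn q)) (sig (Tm xi (dd f)))) (Tm (D xi) f))"
proof -
  have "eqT h (D (Tm xi f)) (Pl (Tm (C (sgn q)) (sig (Tm xi (dd f)))) (Tm (D xi) f))"
    using CONN_parts(5) assms by blast
  then show ?thesis by (rule T2O)
qed

lemma E1o: "selo h a = selo h (fst (evod a)) + selo h (snd (evod a))"
  using St2o[where a=a and b="Pl (fst (evod a)) (snd (evod a))"] E1[of h a] by (simp add: selt_Pl selo_Pl)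
lemma E3o: "selo h (dd a) = selo h (dd (fst (evod a))) + selo h (dd (snd (evod a)))"
  using St2o[where a="dd a" and b="Pl (dd (fst (evod a))) (dd (snd (evod a)))"] E3[of h a] by (simp add: selt_Pl selo_Pl)

lemma sgn_simps: "sgn False = 1" "sgn True = -1" by (simp_all add: sgn_def)

lemma Dsplit: "fdeg x 1 \<Longrightarrow> selo h (D x) = selo h (D (fst (evod x))) + selo h (D (snd (evod x)))"
proof -
  assume x: "fdeg x 1"
  have e: "fdeg (fst (evod x)) 1" "fdeg (snd (evod x)) 1" using E5[OF x] by auto
  have "selo h (D x) = selo h (D (Pl (fst (evod x)) (snd (evod x))))"
    by (rule D_wd[OF x]) (use e E1[of h x] in \<open>auto intro: fdeg.intros(4) simp: selt_Pl\<close>)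
  also have "\<dots> = selo h (D (fst (evod x))) + selo h (D (snd (evod x)))" by (rule D_add[OF e])
  finally show ?thesis .
qed

lemma TL_Tm01: "fdeg f 0 \<Longrightarrow> fdeg x 1 \<Longrightarrow> selo h (dd x) = selo h (D x) \<Longrightarrow>
   selo h (dd (Tm f x)) = selo h (D (Tm f x))"
proof -
  assume fd: "fdeg f 0" and xd: "fdeg x 1" and IH: "selo h (dd x) = selo h (D x)"
  obtain fe fo where ev: "evod f = (fe, fo)" by fastforce
  have e: "fdeg fe 0" "fdeg fo 0" using E5[OF fd] ev by auto
  have p: "ispar fe False" "ispar fo True" using E4[of f] ev by auto
  have d: "fdeg (Tm f x) 1" "fdeg (Tm fe x) 1" "fdeg (Tm fo x) 1"
    by (rule fdeg_Tm[OF fd xd], simp, rule fdeg_Tm[OF e(1) xd], simp, rule fdeg_Tm[OF e(2) xd], simp)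
  have "selo h (D (Tm f x)) = selo h (D (Pl (Tm fe x) (Tm fo x)))"
    by (rule D_wd) (use d E1[of h f] ev in \<open>auto intro: fdeg.intros(4) simp: selt_push algebra_simps\<close>)
  also have "\<dots> = selo h (D (Tm fe x)) + selo h (D (Tm fo x))" using d by (simp add: D_add)
  also have "\<dots> = selo h (dd fe) * selo h x + selo h fe * selo h (D x) + (selo h (dd fo) * selo h x - selo h fo * selo h (D x))"
    using D_L[OF e(1) p(1) xd] D_L[OF e(2) p(2) xd] by (simp add: selo_push sgn_simps)
  finally have DD: "selo h (D (Tm f x)) = \<dots>" .
  have "selo h (dd (Tm f x)) = selo h (dd f) * selo h x + selo h fe * selo h (dd x) - selo h fo * selo h (dd x)"
    using ev by (simp add: selo_push algebra_simps)
  also have "\<dots> = selo h (D (Tm f x))" unfolding DD IH using E3o[of f] ev by (simp add: algebra_simps)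
  finally show ?thesis .
qed

lemma TL_Tm10: "fdeg x 1 \<Longrightarrow> fdeg f 0 \<Longrightarrow> selo h (dd x) = selo h (D x) \<Longrightarrow>
   selo h (dd (Tm x f)) = selo h (D (Tm x f))"
proof -
  assume xd: "fdeg x 1" and fd: "fdeg f 0" and IH: "selo h (dd x) = selo h (D x)"
  obtain xe xo where ev: "evod x = (xe, xo)" by fastforce
  have e: "fdeg xe 1" "fdeg xo 1" using E5[OF xd] ev by auto
  have p: "ispar xe False" "ispar xo True" using E4[of x] ev by auto
  have df: "fdeg (dd f) 1" using E6[OF fd] by simp
  have d: "fdeg (Tm x f) 1" "fdeg (Tm xe f) 1" "fdeg (Tm xo f) 1"
    by (rule fdeg_Tm[OF xd fd], simp, rule fdeg_Tm[OF e(1) fd], simp, rule fdeg_Tm[OF e(2) fd], simp)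
  have s2: "fdeg (Tm xe (dd f)) 2" "fdeg (Tm xo (dd f)) 2"
    by (rule fdeg_Tm[OF e(1) df], simp, rule fdeg_Tm[OF e(2) df], simp)
  have "selo h (D (Tm x f)) = selo h (D (Pl (Tm xe f) (Tm xo f)))"
    by (rule D_wd) (use d E1[of h x] ev in \<open>auto intro: fdeg.intros(4) simp: selt_push algebra_simps\<close>)
  also have "\<dots> = selo h (D (Tm xe f)) + selo h (D (Tm xo f))" using d by (simp add: D_add)
  also have "\<dots> = selo h xe * selo h (dd f) + selo h (D xe) * selo h f - selo h xo * selo h (dd f) + selo h (D xo) * selo h f"
    using D_R[OF fd e(1) p(1)] D_R[OF fd e(2) p(2)] PS[OF s2(1)] PS[OF s2(2)] by (simp add: selo_push sgn_simps)
  finally have DD: "selo h (D (Tm x f)) = \<dots>" .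
  have Dx: "selo h (D x) = selo h (D xe) + selo h (D xo)" using Dsplit[OF xd] ev by simp
  have "selo h (dd (Tm x f)) = selo h (dd x) * selo h f + selo h xe * selo h (dd f) - selo h xo * selo h (dd f)"
    using ev by (simp add: selo_push algebra_simps)
  also have "\<dots> = selo h (D (Tm x f))" unfolding DD IH Dx by (simp add: algebra_simps)
  finally show ?thesis .
qed

lemma p1_gen:
  assumes A: "eqT h (D (G g)) (Pl (Pl (sm c0 (Tm X (Tm (rho h) (rho h)))) (sm t (Tm (G g) (rho h)))) (sm c2 (Tm (rho h) (G g))))"
    and S: "selo h (G g) * selo h (rho h) = qCo (\<lambda>_. s) * (selo h (rho h) * selo h (G g))"
    and dd0: "dd (G g) = C 0" and ts: "t * s = c1"
  shows "eqO h (torsion D (G g)) (sm (-(c1 + c2)) (Tm (rho h) (G g)))"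
proof -
  let ?y = "selo h (rho h) * selo h (G g)"
  have "selo h (torsion D (G g)) = - selo h (D (G g))" unfolding torsion_def dd0 by (simp add: selo_push)
  also have "\<dots> = - (qCo (\<lambda>_. t) * (qCo (\<lambda>_. s) * ?y) + qCo (\<lambda>_. c2) * ?y)"
    using T2O[OF A] by (simp add: selo_push S_O1 S)
  also have "\<dots> = qCo (\<lambda>_. - (t * s + c2)) * ?y"
  proof -
    have e: "qCo (\<lambda>_. t) * (qCo (\<lambda>_. s) * ?y) + qCo (\<lambda>_. c2) * ?y = qCo (\<lambda>h. t * s + c2) * ?y"
      by (simp add: mult.assoc[symmetric] qCo_mult distrib_right[symmetric] qCo_add)
    show ?thesis unfolding e minus_mult_left qCo_neg ..
  qed
  also have "\<dots> = selo h (sm (-(c1 + c2)) (Tm (rho h) (G g)))" using ts by (simp add: selo_push)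
  finally show ?thesis by (simp add: selo_eq)
qed

lemma TL:
  assumes base: "\<And>g. isXi g \<Longrightarrow> selo h (dd (G g)) = selo h (D (G g))"
  shows "fdeg w k \<Longrightarrow> k = 1 \<Longrightarrow> selo h (dd w) = selo h (D w)"
proof (induction rule: fdeg.induct)
  case (1 g) then show ?case using base gdeg1 by simp
next
  case (2 r) then show ?case by simp
next
  case (3 k)
  have e1d: "fdeg e1 1" by (rule fdeg_G') simp
  have "selo h (D (C 0)) = selo h (D (sm 0 e1))"
    by (rule D_wd[OF fdeg_C0 fdeg_sm'[OF e1d]]) (simp add: selt_push qCt_zero)
  also have "\<dots> = 0" using D_sm[OF e1d, of 0] by (simp add: selo_push qCo_zero)
  finally show ?case by (simp add: selo_C0)
next
  case (4 a k b)
  then show ?case by (simp add: selo_Pl D_add)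
next
  case (5 a i b j)
  consider "i = 0" "j = 1" | "i = 1" "j = 0" using 5 by linarith
  then show ?case
  proof cases
    case 1 then show ?thesis using 5 TL_Tm01 by simp
  next
    case 2 then show ?thesis using 5 TL_Tm10 by simp
  qed
qed

end


lemma Xia_123: "Xia 1 = e1" "Xia 2 = et" "Xia 3 = e2" "Xa 1 = t1" "Xa 2 = xx" "Xa 3 = t2"
  by (simp_all add: eval_nat_numeral)

theorem mainTheorem3:
  fixes h c0 c1 c2 :: real and sig D :: "fexp \<Rightarrow> fexp"
  assumes "is_sigma h sig"
    and "is_connection h sig D"
    and "\<forall>a\<in>{1,2,3}. eqT h (D (Xia a))
           (Pl (Pl (sm c0 (Tm (Xa a) (Tm (rho h) (rho h))))
                   (sm (c1 * (-1) ^ hat a) (Tm (Xia a) (rho h))))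
               (sm c2 (Tm (rho h) (Xia a))))"
  shows "(\<forall>a\<in>{1,2,3}. eqO h (torsion D (Xia a)) (sm (-(c1 + c2)) (Tm (rho h) (Xia a))))
         \<and> (torsionless h D \<longleftrightarrow> c2 = -c1)"
proof -
  note pg = p1_gen[OF assms(1) assms(2)]
  have P1: "\<forall>a\<in>{1,2,3}. eqO h (torsion D (Xia a)) (sm (-(c1 + c2)) (Tm (rho h) (Xia a)))"
  proof
    fix a :: nat assume a: "a \<in> {1,2,3}"
    have A: "eqT h (D (Xia a))
           (Pl (Pl (sm c0 (Tm (Xa a) (Tm (rho h) (rho h))))
                   (sm (c1 * (-1) ^ hat a) (Tm (Xia a) (rho h))))
               (sm c2 (Tm (rho h) (Xia a))))" using assms(3) a by blast
    consider "a = 1" | "a = 2" | "a = 3" using a by auto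
    then show "eqO h (torsion D (Xia a)) (sm (-(c1 + c2)) (Tm (rho h) (Xia a)))"
    proof cases
      case 1
      have S: "selo h e1 * selo h (rho h) = qCo (\<lambda>_. 1) * (selo h (rho h) * selo h e1)"
        by (simp add: S_O2 qCo_one)
      show ?thesis using pg[OF A[unfolded 1 Xia_123] S] 1 by (simp add: Xia_123 hat_def)
    next
      case 2
      have S: "selo h et * selo h (rho h) = qCo (\<lambda>_. -1) * (selo h (rho h) * selo h et)"
        by (simp add: S_O2 qCo_mone)
      show ?thesis using pg[OF A[unfolded 2 Xia_123] S] 2 by (simp add: Xia_123 hat_def)
    next
      case 3
      have S: "selo h e2 * selo h (rho h) = qCo (\<lambda>_. 1) * (selo h (rho h) * selo h e2)"
        by (simp add: S_O2 qCo_one)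
      show ?thesis using pg[OF A[unfolded 3 Xia_123] S] 3 by (simp add: Xia_123 hat_def)
    qed
  qed
  have P2: "torsionless h D \<longleftrightarrow> c2 = -c1"
  proof
    assume tl: "torsionless h D"
    have e2d: "fdeg e2 1" by (rule fdeg_G') simp
    have "eqO h (torsion D e2) (C 0)" using tl e2d unfolding torsionless_def by blast
    moreover have "eqO h (torsion D e2) (sm (-(c1 + c2)) (Tm (rho h) e2))" using P1 Xia_123(3) by force
    ultimately have "eqO h (sm (-(c1 + c2)) (Tm (rho h) e2)) (C 0)"
      unfolding eqO_def by (meson cong.sym cong.trans)
    then have "-(c1 + c2) = 0" by (rule rep_nonzero)
    then show "c2 = -c1" by simp
  next
    assume c: "c2 = -c1"
    have base: "selo h (dd (G g)) = selo h (D (G g))" if g: "isXi g" for g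
    proof -
      have "\<exists>a\<in>{1,2,3::nat}. Xia a = G g" using g unfolding isXi_def
        by (auto simp: Xia_123 intro: bexI[where x=1] bexI[where x=2] bexI[where x=3])
      then obtain a where a: "a \<in> {1,2,3}" and ga: "Xia a = G g" by blast
      have "eqO h (torsion D (G g)) (sm (-(c1 + c2)) (Tm (rho h) (G g)))" using P1 a ga by force
      then have "selo h (dd (G g)) - selo h (D (G g)) = 0"
        unfolding selo_eq[symmetric] torsion_def using c by (simp add: selo_push qCo_zero)
      then show ?thesis by simp
    qed
    show "torsionless h D" unfolding torsionless_def
    proof (intro allI impI)
      fix w assume w: "fdeg w 1"
      have "selo h (dd w) = selo h (D w)" by (rule TL[OF assms(1) assms(2) base w HOL.refl])
      then show "eqO h (torsion D w) (C 0)" unfolding selo_eq[symmetric] torsion_def by (simp add: selo_push)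
    qed
  qed
  show ?thesis using P1 P2 by blast
qed

end
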